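(* Let $T>0$, $A\in C([0,T];\mathbb{R}^{n\times n})$, $B\in C([0,T];\mathbb{R}^{n\times m})$, $p\in\mathbb{R}^m$, $P\in\mathbb{S}^m_{++}$, $x_e\in\mathbb{R}^n$, $X_e\in\mathbb{S}^n_{++}$, and consider the system $\dot{x}(s)=A(s)x(s)+B(s)u(s)$ with input set $\mathbb{U}=\mathcal{E}(p,P)$ and terminal set $\mathcal{X}=\mathcal{E}(x_e,X_e)$. Let $n_q\in\mathbb{N}$, $\kappa_i\in C([0,T];\mathbb{R}_{>0})$ for $i\in\{1,\dots,n_q\}$, and let $(q_i,Q_i)$ be the (unique, with $Q_i(t)\in\mathbb{S}^n_{++}$) solution of $$\dot{q}_i=Aq_i+Bp,\quad \dot{Q}_i=AQ_i+Q_iA^T-\Big(\tfrac{1}{\kappa_i}BPB^T+\kappa_iQ_i\Big),\quad q_i(T)=x_e,\ Q_i(T)=X_e.$$ Fix $t\in[0,T]$, $i\in\{1,\dots,n_q\}$, and let $u^\star\in\mathcal{U}[t,T]$ and $x^\star$ satisfy for a.e. $s\in(t,T)$ $$\dot{x}^\star(s)=A(s)x^\star(s)+B(s)u^\star(s),\quad x^\star(T)\in\partial\mathcal{X},\quad u^\star(s)\in\arg\max_{u\in\mathbb{U}}\langle -Q_i(s)^{-1/2}\hat{w}_i(s),B(s)u\rangle,$$ where $\hat{w}_i(s)=Q_i(s)^{-1/2}(x^\star(s)-q_i(s))$. Let $\mathcal{Q}_{i,\star}(s)=Q_i(s)^{-1/2}B(s)PB^T(s)Q_i(s)^{-1/2}$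 and suppose $$\kappa_i(s)=\frac{\|\mathcal{Q}_{i,\star}(s)^{1/2}\hat{w}_i(s)\|_2}{\|\hat{w}_i(s)\|_2}$$ for all $s\in[t,T]$ with $\hat{w}_i(s)\neq 0$. Then $x^\star(t)\in\partial\mathcal{E}(q_i(t),Q_i(t))\cap\partial\mathcal{G}(t)$.
   Context: $\mathbb{S}^n_{++}$ denotes the symmetric positive definite $n\times n$ matrices; $M^{1/2}$ is the symmetric positive semidefinite square root of a symmetric positive semidefinite $M$, $M^{-1/2}$ its inverse when $M$ is positive definite. For $q\in\mathbb{R}^n$, $Q\in\mathbb{S}^n_{++}$, $\mathcal{E}(q,Q)=\{x\in\mathbb{R}^n\,|\,\langle x-q,Q^{-1}(x-q)\rangle\le 1\}$; $\partial$ denotes topological boundary. $\mathcal{U}[t,T]$ is the set of measurable maps $u:[t,T]\to\mathbb{U}$. The backwards reachable set is $\mathcal{G}(t)=\{x\in\mathbb{R}^n\,|\,\exists u\in\mathcal{U}[t,T]$ such that the absolutely continuous solution of $\dot{x}=Ax+Bu$ with $x(t)=x$ satisfies $x(T)\in\mathcal{X}\}$. *)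

theory Defs
  imports "HOL-Analysis.Analysis"
begin

definition spd :: "real^'n^'n \<Rightarrow> bool" where
  "spd M \<longleftrightarrow> transpose M = M \<and> (\<forall>x. x \<noteq> 0 \<longrightarrow> x \<bullet> (M *v x) > 0)"

definition spsd :: "real^'n^'n \<Rightarrow> bool" where
  "spsd M \<longleftrightarrow> transpose M = M \<and> (\<forall>x. x \<bullet> (M *v x) \<ge> 0)"

definition msqrt :: "real^'n^'n \<Rightarrow> real^'n^'n" where
  "msqrt M = (THE R. spsd R \<and> R ** R = M)"

definition minvsqrt :: "real^'n^'n \<Rightarrow> real^'n^'n" where
  "minvsqrt M = matrix_inv (msqrt M)"

definition ellipsoid :: "real^'n \<Rightarrow> real^'n^'n \<Rightarrow> (real^'n) set" where
  "ellipsoid q Q = {x. (x - q) \<bullet> (matrix_inv Q *v (x - q)) \<le> 1}"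

definition abs_continuous_on :: "real \<Rightarrow> real \<Rightarrow> (real \<Rightarrow> 'a::real_normed_vector) \<Rightarrow> bool" where
  "abs_continuous_on a b f \<longleftrightarrow>
     (\<forall>e>0. \<exists>d>0. \<forall>(N::nat) (l::nat \<Rightarrow> real) (r::nat \<Rightarrow> real).
        (\<forall>k<N. a \<le> l k \<and> l k \<le> r k \<and> r k \<le> b) \<and>
        (\<forall>k<N. \<forall>j<N. k \<noteq> j \<longrightarrow> r k \<le> l j \<or> r j \<le> l k) \<and>
        (\<Sum>k<N. r k - l k) < d
        \<longrightarrow> (\<Sum>k<N. norm (f (r k) - f (l k))) < e)"

definition admissible_controls :: "real \<Rightarrow> real \<Rightarrow> ('m::euclidean_space) set \<Rightarrow> (real \<Rightarrow> 'm) set" where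
  "admissible_controls t T U =
     {u. u \<in> borel_measurable (restrict_space lebesgue {t..T}) \<and> (\<forall>s\<in>{t..T}. u s \<in> U)}"

definition is_solution ::
  "(real \<Rightarrow> real^'n^'n) \<Rightarrow> (real \<Rightarrow> real^'m^'n) \<Rightarrow> real \<Rightarrow> real \<Rightarrow>
   (real \<Rightarrow> real^'m) \<Rightarrow> (real \<Rightarrow> real^'n) \<Rightarrow> bool" where
  "is_solution A B t T u x \<longleftrightarrow>
     abs_continuous_on t T x \<and>
     (AE s in lebesgue. s \<in> {t<..<T} \<longrightarrow>
        (x has_vector_derivative (A s *v x s + B s *v u s)) (at s))"

definition backward_reach ::
  "(real \<Rightarrow> real^'n^'n) \<Rightarrow> (real \<Rightarrow> real^'m^'n) \<Rightarrow> (real^'m) set \<Rightarrow> (real^'n) set \<Rightarrow>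
   real \<Rightarrow> real \<Rightarrow> (real^'n) set" where
  "backward_reach A B U X T t =
     {x0. \<exists>u\<in>admissible_controls t T U. \<exists>x. is_solution A B t T u x \<and> x t = x0 \<and> x T \<in> X}"

end

theory Submission
  imports Defs
begin

lemma inner_mv_transpose: "(x::real^'n) \<bullet> (A *v y) = (transpose A *v x) \<bullet> y"
  by (simp add: dot_lmul_matrix)

lemma sym_inner: "transpose M = M \<Longrightarrow> (x::real^'n) \<bullet> (M *v y) = (M *v x) \<bullet> y"
  by (metis inner_mv_transpose)

lemma invertible_props:
  fixes A :: "real^'n^'n"
  assumes "invertible A"
  shows "A ** matrix_inv A = mat 1" "matrix_inv A ** A = mat 1"
proof -
  have "\<exists>A'. A ** A' = mat 1 \<and> A' ** A = mat 1" using assms unfolding invertible_def .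
  hence "A ** matrix_inv A = mat 1 \<and> matrix_inv A ** A = mat 1"
    unfolding matrix_inv_def by (rule someI_ex)
  thus "A ** matrix_inv A = mat 1" "matrix_inv A ** A = mat 1" by auto
qed

lemma inverse_unique_left:
  fixes A B :: "real^'n^'n"
  assumes "invertible A" "B ** A = mat 1"
  shows "B = matrix_inv A"
proof -
  have "B = B ** (A ** matrix_inv A)" using invertible_props(1)[OF assms(1)] by simp
  also have "\<dots> = matrix_inv A" by (simp add: matrix_mul_assoc assms(2))
  finally show ?thesis .
qed

lemma invertible_if_inj:
  fixes A :: "real^'n^'n"
  assumes "\<And>x. A *v x = 0 \<Longrightarrow> x = 0"
  shows "invertible A"
proof -
  have "inj ((*v) A)"
    by (metis (no_types, lifting) assms injI matrix_vector_mult_diff_distrib right_minus_eq)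
  then obtain B where "B ** A = mat 1" using matrix_left_invertible_injective by blast
  thus ?thesis using matrix_left_right_inverse unfolding invertible_def by blast
qed

lemma spd_invertible: "spd (Q::real^'n^'n) \<Longrightarrow> invertible Q"
  unfolding spd_def
  by (rule invertible_if_inj) (metis inner_zero_right less_irrefl)

lemma invertible_inj: "invertible (A::real^'n^'n) \<Longrightarrow> A *v x = 0 \<Longrightarrow> x = 0"
  by (metis invertible_props(2) matrix_vector_mul_assoc matrix_vector_mul_lid matrix_vector_mult_0_right)

lemma inv_mult_left: "invertible (A::real^'n^'n) \<Longrightarrow> matrix_inv A *v (A *v x) = x"
  by (simp add: invertible_props(2) matrix_vector_mul_assoc)

lemma inv_mult_right: "invertible (A::real^'n^'n) \<Longrightarrow> A *v (matrix_inv A *v x) = x"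
  by (simp add: invertible_props(1) matrix_vector_mul_assoc)

lemma transpose_inv:
  fixes A :: "real^'n^'n"
  assumes "invertible A" "transpose A = A"
  shows "transpose (matrix_inv A) = matrix_inv A"
proof -
  have "transpose (matrix_inv A) ** A = mat 1"
    by (metis assms invertible_props(1) matrix_transpose_mul transpose_mat)
  thus ?thesis using inverse_unique_left assms(1) by blast
qed

lemma spd_inv: "spd (Q::real^'n^'n) \<Longrightarrow> spd (matrix_inv Q)"
proof -
  assume Q: "spd Q"
  hence inv: "invertible Q" by (rule spd_invertible)
  have sym: "transpose Q = Q" using Q spd_def by auto
  show ?thesis unfolding spd_def
  proof (intro conjI allI impI)
    show "transpose (matrix_inv Q) = matrix_inv Q" using transpose_inv inv sym by blast
    fix x :: "real^'n" assume "x \<noteq> 0"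
    define y where "y = matrix_inv Q *v x"
    have "y \<noteq> 0" unfolding y_def using \<open>x \<noteq> 0\<close> inv_mult_right[OF inv, of x] by auto
    hence "y \<bullet> (Q *v y) > 0" using Q spd_def by auto
    moreover have "Q *v y = x" unfolding y_def using inv_mult_right[OF inv] .
    ultimately show "x \<bullet> (matrix_inv Q *v x) > 0" unfolding y_def by (simp add: inner_commute)
  qed
qed


definition "orthonormal_eig (M::real^'n^'n) B \<longleftrightarrow> finite B \<and> pairwise orthogonal B \<and>
   (\<forall>b\<in>B. norm b = 1 \<and> M *v b = (b \<bullet> (M *v b)) *\<^sub>R b)"

lemma continuous_on_quad: "continuous_on S (\<lambda>x::real^'n. x \<bullet> (M *v x))"
  by (intro continuous_intros bounded_linear.continuous_on[OF matrix_vector_mul_bounded_linear])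

lemma eig_max:
  fixes M :: "real^'n^'n"
  assumes sym: "transpose M = M" and S: "subspace S" and inv: "\<forall>x\<in>S. M *v x \<in> S" and ne: "S \<noteq> {0}"
  obtains v where "v \<in> S" "norm v = 1" "M *v v = (v \<bullet> (M *v v)) *\<^sub>R v"
proof -
  let ?K = "S \<inter> sphere 0 1"
  have "compact ?K" using closed_subspace[OF S] compact_sphere by (simp add: closed_Int_compact)
  obtain x where "x \<in> S" "x \<noteq> 0" using ne S subspace_0 by blast
  hence "x /\<^sub>R norm x \<in> ?K" using subspace_scale S by auto
  hence "?K \<noteq> {}" by auto
  then obtain v where vK: "v \<in> ?K" and vmax: "\<forall>y\<in>?K. y \<bullet> (M *v y) \<le> v \<bullet> (M *v v)"
    using continuous_attains_sup[OF \<open>compact ?K\<close> _ continuous_on_quad] by blast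
  define lam where "lam = v \<bullet> (M *v v)"
  have vS: "v \<in> S" and nv: "norm v = 1" using vK by auto
  have vv: "v \<bullet> v = 1" using nv by (simp add: dot_square_norm)
  have key: "v \<bullet> (M *v y) = 0" if yS: "y \<in> S" and vy: "v \<bullet> y = 0" for y
  proof (rule ccontr)
    define \<beta> where "\<beta> = v \<bullet> (M *v y)"
    define \<gamma> where "\<gamma> = lam * (y \<bullet> y) - y \<bullet> (M *v y)"
    assume "v \<bullet> (M *v y) \<noteq> 0"
    hence b0: "\<beta> \<noteq> 0" unfolding \<beta>_def .
    have ineq: "2 * \<tau> * \<beta> \<le> \<tau>^2 * \<gamma>" for \<tau>
    proof -
      define z where "z = v + \<tau> *\<^sub>R y"
      have zS: "z \<in> S" unfolding z_def using vS yS S by (simp add: subspace_add subspace_scale)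
      have nz: "z \<bullet> z = 1 + \<tau>^2 * (y \<bullet> y)"
        unfolding z_def using vv vy by (simp add: inner_add_left inner_add_right inner_commute power2_eq_square)
      have "z \<bullet> z \<ge> 1" using nz by (simp add: zero_le_mult_iff)
      hence "norm z > 0" by (metis inner_zero_left not_one_le_zero zero_less_norm_iff)
      have "norm (z /\<^sub>R norm z) = 1" using \<open>norm z > 0\<close> by simp
      hence "(z /\<^sub>R norm z) \<in> ?K" using zS S subspace_scale by auto
      hence "(z /\<^sub>R norm z) \<bullet> (M *v (z /\<^sub>R norm z)) \<le> lam" using vmax lam_def by blast
      hence "(z \<bullet> (M *v z)) / (norm z)^2 \<le> lam"
        by (simp add: matrix_vector_mult_scaleR power2_eq_square divide_inverse ac_simps)
      hence "z \<bullet> (M *v z) \<le> lam * (z \<bullet> z)"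
        using \<open>norm z > 0\<close> by (simp add: divide_le_eq dot_square_norm)
      moreover have "z \<bullet> (M *v z) = lam + 2 * \<tau> * \<beta> + \<tau>^2 * (y \<bullet> (M *v y))"
      proof -
        have "y \<bullet> (M *v v) = \<beta>" unfolding \<beta>_def using sym_inner[OF sym, of y v] by (simp add: inner_commute)
        thus ?thesis unfolding z_def lam_def \<beta>_def
          by (simp add: matrix_vector_mult_scaleR matrix_vector_right_distrib inner_add_left inner_add_right
              power2_eq_square algebra_simps)
      qed
      ultimately show ?thesis unfolding \<gamma>_def using nz by (simp add: algebra_simps)
    qed
    define c where "c = \<bar>\<gamma>\<bar> + 1"
    have c0: "c > 0" unfolding c_def by simp
    have "2 * (\<beta> / c) * \<beta> \<le> (\<beta> / c)^2 * \<gamma>" by (rule ineq)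
    hence "2 * \<beta>^2 * c \<le> \<beta>^2 * \<gamma>" using c0
      by (simp add: power2_eq_square field_simps)
    hence "\<beta>^2 * (2 * c - \<gamma>) \<le> 0" by (simp add: algebra_simps)
    moreover have "\<beta>^2 > 0" using b0 by simp
    moreover have "2 * c - \<gamma> > 0" unfolding c_def by (smt (verit) abs_ge_self)
    ultimately show False by (simp add: mult_le_0_iff)
  qed
  define y0 where "y0 = M *v v - lam *\<^sub>R v"
  have y0S: "y0 \<in> S" unfolding y0_def using inv vS S by (simp add: subspace_diff subspace_scale)
  have vy0: "v \<bullet> y0 = 0" unfolding y0_def lam_def using vv by (simp add: inner_diff_right)
  have "v \<bullet> (M *v y0) = 0" using key[OF y0S vy0] .
  hence "(M *v v) \<bullet> y0 = 0" using sym_inner[OF sym] by simp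
  hence "y0 \<bullet> y0 = 0" using vy0 by (simp add: y0_def inner_diff_left)
  hence "y0 = 0" by simp
  hence "M *v v = lam *\<^sub>R v" unfolding y0_def by simp
  thus ?thesis using that vS nv lam_def by blast
qed

lemma spectral_subspace:
  fixes M :: "real^'n^'n"
  assumes sym: "transpose M = M"
  shows "subspace S \<Longrightarrow> \<forall>x\<in>S. M *v x \<in> S \<Longrightarrow> \<exists>B. B \<subseteq> S \<and> span B = S \<and> orthonormal_eig M B"
proof (induction "dim S" arbitrary: S rule: less_induct)
  case less
  show ?case
  proof (cases "S = {0}")
    case True
    thus ?thesis by (intro exI[of _ "{}"]) (auto simp: orthonormal_eig_def)
  next
    case False
    obtain v where vS: "v \<in> S" and nv: "norm v = 1" and ev: "M *v v = (v \<bullet> (M *v v)) *\<^sub>R v"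
      using eig_max[OF sym less.prems False] by blast
    have vv: "v \<bullet> v = 1" using nv by (simp add: dot_square_norm)
    define S' where "S' = {x \<in> S. v \<bullet> x = 0}"
    have sub': "subspace S'" unfolding S'_def using less.prems(1)
      by (auto simp: subspace_def inner_add_right)
    have inv': "\<forall>x\<in>S'. M *v x \<in> S'"
    proof
      fix x assume "x \<in> S'"
      hence "x \<in> S" "v \<bullet> x = 0" unfolding S'_def by auto
      have "v \<bullet> (M *v x) = (M *v v) \<bullet> x" using sym_inner[OF sym] .
      also have "\<dots> = 0" using ev \<open>v \<bullet> x = 0\<close> by (metis inner_scaleR_left mult_zero_right)
      finally show "M *v x \<in> S'" unfolding S'_def using less.prems(2) \<open>x \<in> S\<close> by auto
    qed
    have "span S' \<subset> span S"
    proof -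
      have "span S' = S'" "span S = S" using sub' less.prems(1) by (auto simp: span_eq_iff)
      moreover have "v \<notin> S'" using vv unfolding S'_def by auto
      hence "S' \<subset> S" using vS unfolding S'_def by blast
      ultimately show ?thesis by metis
    qed
    hence "dim S' < dim S" by (rule dim_psubset)
    then obtain B' where B'S: "B' \<subseteq> S'" and spB': "span B' = S'" and oB': "orthonormal_eig M B'"
      using less.hyps sub' inv' by blast
    define B where "B = insert v B'"
    have "B \<subseteq> S" unfolding B_def using vS B'S S'_def by auto
    moreover have "span B = S"
    proof
      show "span B \<subseteq> S" using \<open>B \<subseteq> S\<close> less.prems(1) by (simp add: span_minimal)
      show "S \<subseteq> span B"
      proof
        fix x assume xS: "x \<in> S"
        have "x - (v \<bullet> x) *\<^sub>R v \<in> S'" unfolding S'_def using xS vS less.prems(1) vv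
          by (simp add: subspace_diff subspace_scale inner_diff_right)
        hence "x - (v \<bullet> x) *\<^sub>R v \<in> span B" using spB' unfolding B_def by (metis span_mono subset_insertI subsetD)
        moreover have "v \<in> span B" unfolding B_def by (simp add: span_base)
        ultimately show "x \<in> span B" by (metis diff_add_cancel span_add span_scale)
      qed
    qed
    moreover have "orthonormal_eig M B"
      unfolding orthonormal_eig_def B_def
    proof (intro conjI)
      show "finite (insert v B')" using oB' orthonormal_eig_def by auto
      show "pairwise orthogonal (insert v B')"
        using oB' B'S unfolding orthonormal_eig_def pairwise_insert S'_def orthogonal_def
        by (auto simp: inner_commute)
      show "\<forall>b\<in>insert v B'. norm b = 1 \<and> M *v b = (b \<bullet> (M *v b)) *\<^sub>R b"
        using oB' nv ev unfolding orthonormal_eig_def by auto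
    qed
    ultimately show ?thesis by blast
  qed
qed

lemma spectral:
  fixes M :: "real^'n^'n"
  assumes sym: "transpose M = M"
  obtains B where "span B = UNIV" "orthonormal_eig M B"
  using spectral_subspace[OF sym, of UNIV] by auto

lemma orthonormal_expand:
  fixes M :: "real^'n^'n"
  assumes o: "orthonormal_eig M B" and sp: "span B = UNIV"
  shows "x = (\<Sum>b\<in>B. (b \<bullet> x) *\<^sub>R b)"
proof -
  have fin: "finite B" using o orthonormal_eig_def by auto
  have "x \<in> span B" using sp by simp
  then obtain u where xu: "x = (\<Sum>v\<in>B. u v *\<^sub>R v)" using span_finite[OF fin] by auto
  have "b \<bullet> x = u b" if "b \<in> B" for b
  proof -
    have "b \<bullet> x = (\<Sum>v\<in>B. u v * (b \<bullet> v))" unfolding xu by (simp add: inner_sum_right)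
    also have "\<dots> = (\<Sum>v\<in>B. if v = b then u v else 0)"
    proof (rule sum.cong[OF refl])
      fix v assume "v \<in> B"
      show "u v * (b \<bullet> v) = (if v = b then u v else 0)"
      proof (cases "v = b")
        case True
        hence "b \<bullet> v = 1" using o that unfolding orthonormal_eig_def by (simp add: dot_square_norm)
        thus ?thesis using True by simp
      next
        case False
        hence "b \<bullet> v = 0" using o that \<open>v \<in> B\<close> unfolding orthonormal_eig_def pairwise_def orthogonal_def by auto
        thus ?thesis using False by simp
      qed
    qed
    also have "\<dots> = u b" using fin that by (simp add: sum.delta')
    finally show ?thesis .
  qed
  thus ?thesis unfolding xu[symmetric] using xu by (metis (no_types, lifting) sum.cong)
qed


lemma inner_eq_all: "(\<And>y. (a::real^'n) \<bullet> y = b \<bullet> y) \<Longrightarrow> a = b"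
  by (metis inner_diff_left inner_eq_zero_iff right_minus_eq)

lemma psd_root_eig:
  fixes R :: "real^'n^'n"
  assumes R: "spsd R" and e: "R *v (R *v b) = lam *\<^sub>R b" and l: "lam \<ge> 0"
  shows "R *v b = sqrt lam *\<^sub>R b"
proof -
  have sym: "transpose R = R" and psd: "\<And>x. x \<bullet> (R *v x) \<ge> 0" using R spsd_def by auto
  define s where "s = sqrt lam"
  have ss: "s * s = lam" using l s_def by (simp add: real_sqrt_mult_self)
  show ?thesis
  proof (cases "s = 0")
    case True
    hence "lam = 0" using ss by simp
    hence "R *v (R *v b) = 0" using e by simp
    hence "(R *v b) \<bullet> (R *v b) = 0" using sym_inner[OF sym, of b "R *v b"] by simp
    thus ?thesis using True s_def by simp
  next
    case False
    hence s0: "s > 0" unfolding s_def using l by simp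
    define z where "z = R *v b - s *\<^sub>R b"
    have "R *v z = R *v (R *v b) - s *\<^sub>R (R *v b)"
      unfolding z_def by (simp add: matrix_vector_mult_diff_distrib matrix_vector_mult_scaleR)
    also have "\<dots> = (-s) *\<^sub>R z" unfolding z_def e ss[symmetric] by (simp add: algebra_simps)
    finally have "z \<bullet> (R *v z) = - s * (z \<bullet> z)" by simp
    hence "- s * (z \<bullet> z) \<ge> 0" using psd by metis
    hence "z \<bullet> z \<le> 0" using s0 by (simp add: mult_le_0_iff)
    hence "z = 0" by (metis inner_eq_zero_iff inner_ge_zero order_antisym)
    thus ?thesis unfolding z_def s_def by simp
  qed
qed

lemma onb_coeff:
  assumes o: "orthonormal_eig (M::real^'n^'n) B" and b: "b \<in> B"
  shows "b \<bullet> (\<Sum>v\<in>B. c v *\<^sub>R v) = c b"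
proof -
  have fin: "finite B" using o orthonormal_eig_def by auto
  have "b \<bullet> (\<Sum>v\<in>B. c v *\<^sub>R v) = (\<Sum>v\<in>B. c v * (b \<bullet> v))" by (simp add: inner_sum_right)
  also have "\<dots> = (\<Sum>v\<in>B. if v = b then c v else 0)"
  proof (rule sum.cong[OF refl])
    fix v assume "v \<in> B"
    show "c v * (b \<bullet> v) = (if v = b then c v else 0)"
    proof (cases "v = b")
      case True
      hence "b \<bullet> v = 1" using o b unfolding orthonormal_eig_def by (simp add: dot_square_norm)
      thus ?thesis using True by simp
    next
      case False
      hence "b \<bullet> v = 0" using o b \<open>v \<in> B\<close> unfolding orthonormal_eig_def pairwise_def orthogonal_def by auto
      thus ?thesis using False by simp
    qed
  qed
  also have "\<dots> = c b" using fin b by (simp add: sum.delta')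
  finally show ?thesis .
qed

lemma mv_sum: "(A::real^'n^'m) *v (\<Sum>v\<in>B. f v) = (\<Sum>v\<in>B. A *v f v)"
  by (induction B rule: infinite_finite_induct) (auto simp: matrix_vector_right_distrib)

lemma msqrt_ex1:
  fixes M :: "real^'n^'n"
  assumes M: "spsd M"
  shows "\<exists>!R. spsd R \<and> R ** R = M"
proof -
  have sym: "transpose M = M" and psd: "\<And>x. x \<bullet> (M *v x) \<ge> 0" using M spsd_def by auto
  obtain B where sp: "span B = UNIV" and o: "orthonormal_eig M B" using spectral[OF sym] by blast
  have fin: "finite B" using o orthonormal_eig_def by auto
  define lam where "lam b = b \<bullet> (M *v b)" for b
  have ev: "M *v b = lam b *\<^sub>R b" if "b \<in> B" for b using o that unfolding orthonormal_eig_def lam_def by auto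
  have l0: "lam b \<ge> 0" for b using psd lam_def by auto
  have exp: "x = (\<Sum>b\<in>B. (b \<bullet> x) *\<^sub>R b)" for x using orthonormal_expand[OF o sp] .
  define f where "f x = (\<Sum>b\<in>B. (sqrt (lam b) * (b \<bullet> x)) *\<^sub>R b)" for x
  have lf: "linear f"
    by (rule linearI) (simp_all add: f_def inner_add_right scaleR_add_left sum.distrib scaleR_sum_right
        distrib_left mult.left_commute)
  define R where "R = matrix f"
  have Rx: "R *v x = f x" for x unfolding R_def using fun_cong[OF matrix_vector_mul(2)[OF lf]] by simp
  have Mx: "M *v x = (\<Sum>b\<in>B. (lam b * (b \<bullet> x)) *\<^sub>R b)" for x
  proof -
    have "M *v x = M *v (\<Sum>b\<in>B. (b \<bullet> x) *\<^sub>R b)" using exp[of x] by simp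
    also have "\<dots> = (\<Sum>b\<in>B. (b \<bullet> x) *\<^sub>R (M *v b))" by (simp add: mv_sum matrix_vector_mult_scaleR)
    also have "\<dots> = (\<Sum>b\<in>B. (lam b * (b \<bullet> x)) *\<^sub>R b)"
      by (rule sum.cong[OF refl]) (simp add: ev)
    finally show ?thesis .
  qed
  have RR: "R ** R = M"
  proof -
    have "(R ** R) *v x = M *v x" for x
    proof -
      have "(R ** R) *v x = f (f x)" by (simp add: Rx flip: matrix_vector_mul_assoc)
      also have "\<dots> = (\<Sum>b\<in>B. (sqrt (lam b) * (sqrt (lam b) * (b \<bullet> x))) *\<^sub>R b)"
        unfolding f_def[of "f x"] using onb_coeff[OF o] unfolding f_def
        by (intro sum.cong[OF refl]) simp
      also have "\<dots> = M *v x" unfolding Mx using l0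
        by (intro sum.cong[OF refl]) (simp add: mult.assoc[symmetric] real_sqrt_mult_self)
      finally show ?thesis .
    qed
    thus ?thesis by (simp add: matrix_eq)
  qed
  have xRy: "x \<bullet> (R *v y) = (\<Sum>b\<in>B. sqrt (lam b) * (b \<bullet> y) * (b \<bullet> x))" for x y
    unfolding Rx f_def by (simp add: inner_sum_right inner_commute)
  have symR: "transpose R = R"
  proof -
    have "transpose R *v x = R *v x" for x
    proof (rule inner_eq_all)
      fix y
      have "(transpose R *v x) \<bullet> y = x \<bullet> (R *v y)" by (simp add: inner_mv_transpose)
      also have "\<dots> = y \<bullet> (R *v x)" unfolding xRy by (simp add: ac_simps)
      finally show "(transpose R *v x) \<bullet> y = (R *v x) \<bullet> y" by (simp add: inner_commute)
    qed
    thus ?thesis by (simp add: matrix_eq)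
  qed
  have psdR: "x \<bullet> (R *v x) \<ge> 0" for x
    unfolding xRy using l0 by (intro sum_nonneg) (simp add: mult.assoc)
  have spsdR: "spsd R" using symR psdR spsd_def by auto
  show ?thesis
  proof (rule ex1I[of _ R])
    show "spsd R \<and> R ** R = M" using spsdR RR by simp
    fix R' assume R': "spsd R' \<and> R' ** R' = M"
    have eb: "R' *v b = sqrt (lam b) *\<^sub>R b" if "b \<in> B" for b
      using psd_root_eig[of R' b "lam b"] R' ev[OF that] l0 by (simp add: matrix_vector_mul_assoc)
    have "R' *v x = R *v x" for x
    proof -
      have "R' *v x = R' *v (\<Sum>b\<in>B. (b \<bullet> x) *\<^sub>R b)" using exp[of x] by simp
      also have "\<dots> = (\<Sum>b\<in>B. (b \<bullet> x) *\<^sub>R (R' *v b))" by (simp add: mv_sum matrix_vector_mult_scaleR)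
      also have "\<dots> = R *v x" unfolding Rx f_def
        by (rule sum.cong[OF refl]) (simp add: eb)
      finally show ?thesis .
    qed
    thus "R' = R" by (simp add: matrix_eq)
  qed
qed

lemma msqrt_props:
  assumes "spsd (M::real^'n^'n)"
  shows "spsd (msqrt M)" "msqrt M ** msqrt M = M"
proof -
  have "spsd (msqrt M) \<and> msqrt M ** msqrt M = M"
    unfolding msqrt_def by (rule theI'[OF msqrt_ex1[OF assms]])
  thus "spsd (msqrt M)" "msqrt M ** msqrt M = M" by auto
qed

lemma msqrt_norm:
  assumes "spsd (M::real^'n^'n)"
  shows "(norm (msqrt M *v y))^2 = y \<bullet> (M *v y)"
proof -
  have s: "transpose (msqrt M) = msqrt M" using msqrt_props(1)[OF assms] spsd_def by auto
  have "(norm (msqrt M *v y))^2 = (msqrt M *v y) \<bullet> (msqrt M *v y)" by (simp add: dot_square_norm)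
  also have "\<dots> = y \<bullet> (msqrt M *v (msqrt M *v y))" using sym_inner[OF s] by simp
  also have "\<dots> = y \<bullet> (M *v y)" by (simp add: matrix_vector_mul_assoc msqrt_props(2)[OF assms])
  finally show ?thesis .
qed

lemma spd_spsd: "spd M \<Longrightarrow> spsd M"
  unfolding spd_def spsd_def by (metis inner_zero_left order_le_less)

lemma minvsqrt_props:
  fixes Q :: "real^'n^'n"
  assumes Q: "spd Q"
  shows "transpose (minvsqrt Q) = minvsqrt Q" "minvsqrt Q ** minvsqrt Q = matrix_inv Q"
    "invertible (minvsqrt Q)"
proof -
  let ?R = "msqrt Q"
  have sp: "spsd Q" using Q by (rule spd_spsd)
  have Rs: "spsd ?R" and RR: "?R ** ?R = Q" using msqrt_props[OF sp] by auto
  have symR: "transpose ?R = ?R" using Rs spsd_def by auto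
  have invR: "invertible ?R"
  proof (rule invertible_if_inj)
    fix x assume "?R *v x = 0"
    hence "Q *v x = 0" by (metis RR matrix_vector_mul_assoc matrix_vector_mult_0_right)
    thus "x = 0" using Q unfolding spd_def by (metis inner_zero_right less_irrefl)
  qed
  show "transpose (minvsqrt Q) = minvsqrt Q" unfolding minvsqrt_def using transpose_inv invR symR by blast
  have invQ: "invertible Q" using Q spd_invertible by blast
  have "(minvsqrt Q ** minvsqrt Q) ** Q = mat 1"
  proof -
    have "(minvsqrt Q ** minvsqrt Q) ** Q = (minvsqrt Q ** minvsqrt Q) ** (?R ** ?R)"
      using RR by simp
    also have "\<dots> = minvsqrt Q ** ((minvsqrt Q ** ?R) ** ?R)" by (simp only: matrix_mul_assoc)
    also have "\<dots> = mat 1" unfolding minvsqrt_def by (simp add: invertible_props(2)[OF invR])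
    finally show ?thesis .
  qed
  thus "minvsqrt Q ** minvsqrt Q = matrix_inv Q" using inverse_unique_left[OF invQ] by blast
  show "invertible (minvsqrt Q)" unfolding invertible_def minvsqrt_def
    by (rule exI[of _ ?R]) (simp add: invertible_props[OF invR])
qed


lemma bilinear_mm: "bilinear (\<lambda>(A::real^'n^'m) (B::real^'p^'n). A ** B)"
  unfolding bilinear_def
  by (auto intro!: linearI simp: matrix_add_ldistrib matrix_scalar_ac scalar_matrix_assoc
      matrix_matrix_mult_def vec_eq_iff sum.distrib algebra_simps sum_distrib_left)

lemma bb_mm: "bounded_bilinear (\<lambda>(A::real^'n^'m) (B::real^'p^'n). A ** B)"
  using bilinear_mm bilinear_conv_bounded_bilinear by blast

lemma bilinear_mv: "bilinear (\<lambda>(A::real^'n^'m) (x::real^'n). A *v x)"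
  unfolding bilinear_def
  by (auto intro!: linearI simp: matrix_vector_mult_def vec_eq_iff sum.distrib algebra_simps
      sum_distrib_left)

lemma bb_mv: "bounded_bilinear (\<lambda>(A::real^'n^'m) (x::real^'n). A *v x)"
  using bilinear_mv bilinear_conv_bounded_bilinear by blast

lemma mat_entry_le: "\<bar>(A::real^'n^'m) $ i $ j\<bar> \<le> norm (A *v axis j 1)"
proof -
  have "(A *v axis j 1) $ i = A $ i $ j" by (simp add: matrix_vector_mul_component inner_axis)
  thus ?thesis by (metis component_le_norm_cart)
qed

lemma norm_mat_le_sum: "norm (A::real^'n^'m) \<le> (\<Sum>i\<in>UNIV. \<Sum>j\<in>UNIV. \<bar>A $ i $ j\<bar>)"
proof -
  have "norm A \<le> (\<Sum>i\<in>UNIV. norm (A $ i))" unfolding norm_vec_def by (rule L2_set_le_sum) simp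
  also have "\<dots> \<le> (\<Sum>i\<in>UNIV. \<Sum>j\<in>UNIV. \<bar>A $ i $ j\<bar>)"
    by (rule sum_mono) (rule norm_le_l1_cart)
  finally show ?thesis .
qed

lemma norm_mat_op_bound:
  assumes "\<And>w. norm ((A::real^'n^'m) *v w) \<le> C * norm w"
  shows "norm A \<le> real CARD('m) * real CARD('n) * C"
proof -
  have e: "\<bar>A $ i $ j\<bar> \<le> C" for i j
    using mat_entry_le[of A i j] assms[of "axis j 1"] by simp
  have "norm A \<le> (\<Sum>i\<in>(UNIV::'m set). \<Sum>j\<in>(UNIV::'n set). C)"
    using norm_mat_le_sum[of A] e by (meson order_trans sum_mono)
  thus ?thesis by simp
qed

lemma minv_cont_bound:
  fixes Q :: "real \<Rightarrow> real^'n^'n"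
  assumes contQ: "(Q \<longlongrightarrow> Q x) (at x within S)" and inv: "\<forall>y\<in>S. invertible (Q y)" and xS: "x \<in> S"
  shows "((\<lambda>y. matrix_inv (Q y)) \<longlongrightarrow> matrix_inv (Q x)) (at x within S)"
    and "\<exists>C. eventually (\<lambda>y. norm (matrix_inv (Q y)) \<le> C) (at x within S)"
proof -
  obtain K1 where K1: "K1 > 0" "\<And>(A::real^'n^'n) z. norm (A *v z) \<le> norm A * norm z * K1"
    using bounded_bilinear.pos_bounded[OF bb_mv] by auto
  obtain K2 where K2: "K2 > 0" "\<And>(A::real^'n^'n) (B::real^'n^'n). norm (A ** B) \<le> norm A * norm B * K2"
    using bounded_bilinear.pos_bounded[OF bb_mm] by auto
  define Mx where "Mx = matrix_inv (Q x)"
  define Kx where "Kx = norm Mx * K1 + 1"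
  have "norm Mx * K1 \<ge> 0" using K1 by simp
  hence Kx0: "Kx > 0" unfolding Kx_def by linarith
  have invx: "invertible (Q x)" using inv xS by auto
  have lowx: "norm z \<le> Kx * norm (Q x *v z)" for z
  proof -
    have "norm z = norm (Mx *v (Q x *v z))" unfolding Mx_def using inv_mult_left[OF invx] by simp
    also have "\<dots> \<le> norm Mx * norm (Q x *v z) * K1" by (rule K1)
    also have "\<dots> \<le> Kx * norm (Q x *v z)" unfolding Kx_def by (simp add: algebra_simps)
    finally show ?thesis .
  qed
  define r where "r = 1 / (2 * Kx * K1)"
  have r0: "r > 0" unfolding r_def using Kx0 K1 by simp
  define C where "C = real CARD('n) * real CARD('n) * (2 * Kx)"
  have bnd: "norm (matrix_inv (Q y)) \<le> C" if yS: "y \<in> S" and yr: "norm (Q y - Q x) < r" for y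
  proof -
    have invy: "invertible (Q y)" using inv yS by auto
    have lowy: "norm z \<le> 2 * Kx * norm (Q y *v z)" for z
    proof -
      have "norm ((Q y - Q x) *v z) \<le> norm (Q y - Q x) * norm z * K1" by (rule K1)
      also have "\<dots> \<le> r * norm z * K1" using yr K1 by (simp add: mult_right_mono)
      also have "\<dots> = norm z / (2 * Kx)" unfolding r_def using K1 by simp
      finally have a: "norm ((Q y - Q x) *v z) \<le> norm z / (2 * Kx)" .
      have "Q x *v z = Q y *v z - (Q y - Q x) *v z" by (simp add: matrix_vector_mult_diff_rdistrib)
      hence "norm (Q x *v z) \<le> norm (Q y *v z) + norm ((Q y - Q x) *v z)" by (metis norm_triangle_ineq4)
      hence "norm (Q x *v z) \<le> norm (Q y *v z) + norm z / (2 * Kx)" using a by linarith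
      hence "norm z \<le> Kx * (norm (Q y *v z) + norm z / (2 * Kx))" using lowx[of z] Kx0
        by (meson mult_left_mono less_imp_le order_trans)
      hence "norm z \<le> Kx * norm (Q y *v z) + norm z / 2" using Kx0 by (simp add: algebra_simps)
      thus ?thesis by simp
    qed
    have "norm (matrix_inv (Q y) *v w) \<le> (2 * Kx) * norm w" for w
      using lowy[of "matrix_inv (Q y) *v w"] inv_mult_right[OF invy] by simp
    thus ?thesis unfolding C_def by (rule norm_mat_op_bound)
  qed
  have ev: "eventually (\<lambda>y. y \<in> S \<and> norm (Q y - Q x) < r) (at x within S)"
  proof -
    have "eventually (\<lambda>y. dist (Q y) (Q x) < r) (at x within S)" using contQ r0 by (rule tendstoD)
    moreover have "eventually (\<lambda>y. y \<in> S) (at x within S)" by (simp add: eventually_at_filter)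
    ultimately show ?thesis by eventually_elim (simp add: dist_norm)
  qed
  have evC: "eventually (\<lambda>y. norm (matrix_inv (Q y)) \<le> C) (at x within S)"
    using ev by eventually_elim (use bnd in auto)
  thus "\<exists>C. eventually (\<lambda>y. norm (matrix_inv (Q y)) \<le> C) (at x within S)" by blast
  have "((\<lambda>y. matrix_inv (Q y) - Mx) \<longlongrightarrow> 0) (at x within S)"
  proof (rule Lim_null_comparison)
    show "eventually (\<lambda>y. norm (matrix_inv (Q y) - Mx) \<le> C * norm (Q y - Q x) * norm Mx * K2 * K2) (at x within S)"
      using ev
    proof eventually_elim
      case (elim y)
      hence invy: "invertible (Q y)" and b: "norm (matrix_inv (Q y)) \<le> C" using inv bnd by auto
      have "matrix_inv (Q y) ** (Q y - Q x) ** Mx = Mx - matrix_inv (Q y)"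
        unfolding Mx_def
        by (simp add: bounded_bilinear.diff_right[OF bb_mm, simplified] bounded_bilinear.diff_left[OF bb_mm, simplified]
            invertible_props[OF invy] invertible_props[OF invx] flip: matrix_mul_assoc)
      hence "norm (matrix_inv (Q y) - Mx) = norm (matrix_inv (Q y) ** (Q y - Q x) ** Mx)"
        by (metis norm_minus_commute)
      also have "\<dots> \<le> norm (matrix_inv (Q y) ** (Q y - Q x)) * norm Mx * K2" by (rule K2)
      also have "\<dots> \<le> (norm (matrix_inv (Q y)) * norm (Q y - Q x) * K2) * norm Mx * K2"
        using K2 by (intro mult_right_mono) auto
      also have "\<dots> \<le> (C * norm (Q y - Q x) * K2) * norm Mx * K2"
        using K2 b by (intro mult_right_mono) auto
      finally show ?case by (simp add: ac_simps)
    qed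
    have "((\<lambda>y. Q y - Q x) \<longlongrightarrow> 0) (at x within S)" using contQ by (simp add: LIM_zero)
    hence "((\<lambda>y. norm (Q y - Q x)) \<longlongrightarrow> 0) (at x within S)" by (rule tendsto_norm_zero)
    thus "((\<lambda>y. C * norm (Q y - Q x) * norm Mx * K2 * K2) \<longlongrightarrow> 0) (at x within S)"
      using contQ by (auto intro!: tendsto_eq_intros)
  qed
  thus "((\<lambda>y. matrix_inv (Q y)) \<longlongrightarrow> matrix_inv (Q x)) (at x within S)"
    unfolding Mx_def by (simp add: LIM_zero_iff)
qed

lemmas mm_diff_left = bounded_bilinear.diff_left[OF bb_mm, simplified]
lemmas mm_diff_right = bounded_bilinear.diff_right[OF bb_mm, simplified]
lemmas mm_add_left = bounded_bilinear.add_left[OF bb_mm, simplified]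
lemmas mm_add_right = bounded_bilinear.add_right[OF bb_mm, simplified]
lemmas mm_scaleR_left = bounded_bilinear.scaleR_left[OF bb_mm, simplified]
lemmas mm_scaleR_right = bounded_bilinear.scaleR_right[OF bb_mm, simplified]
lemmas mm_minus_left = bounded_bilinear.minus_left[OF bb_mm, simplified]
lemmas mm_minus_right = bounded_bilinear.minus_right[OF bb_mm, simplified]

lemma inv_diff_identity:
  fixes A B Q' :: "real^'n^'n"
  assumes iA: "invertible A" and iB: "invertible B"
  shows "(matrix_inv B - matrix_inv A) - h *\<^sub>R (- (matrix_inv A ** Q' ** matrix_inv A))
    = - (matrix_inv B ** ((B - A) - h *\<^sub>R Q') ** matrix_inv A) - h *\<^sub>R ((matrix_inv B - matrix_inv A) ** Q' ** matrix_inv A)"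
proof -
  have e: "matrix_inv B ** (B - A) ** matrix_inv A = matrix_inv A - matrix_inv B"
    by (simp add: mm_diff_right mm_diff_left invertible_props[OF iA] invertible_props[OF iB] flip: matrix_mul_assoc)
  have "matrix_inv B ** ((B - A) - h *\<^sub>R Q') ** matrix_inv A
      = matrix_inv B ** (B - A) ** matrix_inv A - h *\<^sub>R (matrix_inv B ** Q' ** matrix_inv A)"
    by (simp add: mm_diff_right mm_diff_left mm_scaleR_left mm_scaleR_right)
  also have "\<dots> = matrix_inv A - matrix_inv B - h *\<^sub>R (matrix_inv B ** Q' ** matrix_inv A)" using e by simp
  finally have f: "matrix_inv B ** ((B - A) - h *\<^sub>R Q') ** matrix_inv A = \<dots>" .
  have g: "(matrix_inv B - matrix_inv A) ** Q' ** matrix_inv A = matrix_inv B ** Q' ** matrix_inv A - matrix_inv A ** Q' ** matrix_inv A"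
    by (simp add: mm_diff_left)
  show ?thesis unfolding f g by (simp add: algebra_simps)
qed

lemma minv_deriv:
  fixes Q :: "real \<Rightarrow> real^'n^'n"
  assumes dQ: "(Q has_vector_derivative Q') (at x within S)" and inv: "\<forall>y\<in>S. invertible (Q y)" and xS: "x \<in> S"
  shows "((\<lambda>y. matrix_inv (Q y)) has_vector_derivative (- (matrix_inv (Q x) ** Q' ** matrix_inv (Q x)))) (at x within S)"
proof -
  have contQ: "(Q \<longlongrightarrow> Q x) (at x within S)"
    using has_vector_derivative_continuous[OF dQ] by (simp add: continuous_within)
  note cb = minv_cont_bound[OF contQ inv xS]
  obtain C where evC: "eventually (\<lambda>y. norm (matrix_inv (Q y)) \<le> C) (at x within S)" using cb(2) by blast
  obtain K2 where K2: "K2 > 0" "\<And>(A::real^'n^'n) (B::real^'n^'n). norm (A ** B) \<le> norm A * norm B * K2"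
    using bounded_bilinear.pos_bounded[OF bb_mm] by auto
  define Mx where "Mx = matrix_inv (Q x)"
  define E where "E y = ((Q y - Q x) - (y - x) *\<^sub>R Q') /\<^sub>R norm (y - x)" for y
  have invx: "invertible (Q x)" using inv xS by auto
  have E0: "(E \<longlongrightarrow> 0) (at x within S)"
    using dQ unfolding has_vector_derivative_def has_derivative_at_within E_def by simp
  have M0: "((\<lambda>y. matrix_inv (Q y) - Mx) \<longlongrightarrow> 0) (at x within S)"
    using cb(1) unfolding Mx_def by (simp add: LIM_zero)
  show ?thesis
    unfolding has_vector_derivative_def has_derivative_at_within
  proof (intro conjI bounded_linear_scaleR_left)
    let ?D = "- (matrix_inv (Q x) ** Q' ** matrix_inv (Q x))"
    show "((\<lambda>y. (matrix_inv (Q y) - matrix_inv (Q x) - (y - x) *\<^sub>R ?D) /\<^sub>R norm (y - x)) \<longlongrightarrow> 0) (at x within S)"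
    proof (rule Lim_null_comparison)
      have ev: "eventually (\<lambda>y. y \<in> S \<and> norm (matrix_inv (Q y)) \<le> C) (at x within S)"
        using evC by (simp add: eventually_at_filter)
      show "eventually (\<lambda>y. norm ((matrix_inv (Q y) - matrix_inv (Q x) - (y - x) *\<^sub>R ?D) /\<^sub>R norm (y - x))
          \<le> C * norm (E y) * norm Mx * K2 * K2 + norm (matrix_inv (Q y) - Mx) * norm Q' * norm Mx * K2 * K2) (at x within S)"
        using ev
      proof eventually_elim
        case (elim y)
        hence invy: "invertible (Q y)" using inv by auto
        define My where "My = matrix_inv (Q y)"
        have id: "(matrix_inv (Q y) - matrix_inv (Q x) - (y - x) *\<^sub>R ?D) /\<^sub>R norm (y - x)
           = - (My ** E y ** Mx) - ((y - x) / norm (y - x)) *\<^sub>R ((My - Mx) ** Q' ** Mx)"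
        proof -
          have s1: "My ** E y ** Mx = (My ** ((Q y - Q x) - (y-x) *\<^sub>R Q') ** Mx) /\<^sub>R norm (y - x)"
            unfolding E_def by (simp only: mm_scaleR_left mm_scaleR_right)
          show ?thesis unfolding s1 unfolding inv_diff_identity[OF invx invy] My_def Mx_def
            by (simp add: divide_inverse scaleR_diff_right ac_simps)
        qed
        have n1: "norm (My ** E y ** Mx) \<le> C * norm (E y) * norm Mx * K2 * K2"
        proof -
          have "norm (My ** E y ** Mx) \<le> norm (My ** E y) * norm Mx * K2" by (rule K2)
          also have "\<dots> \<le> (norm My * norm (E y) * K2) * norm Mx * K2"
            using K2 by (intro mult_right_mono) auto
          also have "\<dots> \<le> (C * norm (E y) * K2) * norm Mx * K2"
            using K2 elim My_def by (intro mult_right_mono) auto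
          finally show ?thesis by (simp add: ac_simps)
        qed
        have n2: "norm (((y - x) / norm (y - x)) *\<^sub>R ((My - Mx) ** Q' ** Mx)) \<le> norm (My - Mx) * norm Q' * norm Mx * K2 * K2"
        proof -
          have "\<bar>(y - x) / norm (y - x)\<bar> \<le> 1" by (cases "y = x") auto
          hence "norm (((y - x) / norm (y - x)) *\<^sub>R ((My - Mx) ** Q' ** Mx)) \<le> norm ((My - Mx) ** Q' ** Mx)"
            by (simp add: mult_left_le_one_le)
          also have "\<dots> \<le> norm ((My - Mx) ** Q') * norm Mx * K2" by (rule K2)
          also have "\<dots> \<le> (norm (My - Mx) * norm Q' * K2) * norm Mx * K2"
            using K2 by (intro mult_right_mono) auto
          finally show ?thesis by (simp add: ac_simps)
        qed
        have t: "norm (- (My ** E y ** Mx) - ((y - x) / norm (y - x)) *\<^sub>R ((My - Mx) ** Q' ** Mx))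
          \<le> norm (My ** E y ** Mx) + norm (((y - x) / norm (y - x)) *\<^sub>R ((My - Mx) ** Q' ** Mx))"
          by (metis norm_minus_cancel norm_triangle_ineq4)
        show ?case unfolding id using t n1 n2 unfolding My_def by linarith
      qed
      show "((\<lambda>y. C * norm (E y) * norm Mx * K2 * K2 + norm (matrix_inv (Q y) - Mx) * norm Q' * norm Mx * K2 * K2) \<longlongrightarrow> 0) (at x within S)"
        using E0 cb(1) unfolding Mx_def
        by (auto intro!: tendsto_eq_intros)
    qed
  qed
qed


lemma ac_sub:
  assumes "abs_continuous_on a b f" "a \<le> c" "d \<le> b"
  shows "abs_continuous_on c d f"
  unfolding abs_continuous_on_def
proof (intro allI impI)
  fix e :: real assume "e > 0"
  then obtain del where del: "del > 0" and H: "\<And>(N::nat) l r. (\<forall>k<N. a \<le> l k \<and> l k \<le> r k \<and> r k \<le> b) \<and>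
        (\<forall>k<N. \<forall>j<N. k \<noteq> j \<longrightarrow> r k \<le> l j \<or> r j \<le> l k) \<and> (\<Sum>k<N. r k - l k) < del
        \<longrightarrow> (\<Sum>k<N. norm (f (r k) - f (l k))) < e"
    using assms(1) unfolding abs_continuous_on_def by blast
  show "\<exists>del>0. \<forall>(N::nat) l r. (\<forall>k<N. c \<le> l k \<and> l k \<le> r k \<and> r k \<le> d) \<and>
        (\<forall>k<N. \<forall>j<N. k \<noteq> j \<longrightarrow> r k \<le> l j \<or> r j \<le> l k) \<and> (\<Sum>k<N. r k - l k) < del
        \<longrightarrow> (\<Sum>k<N. norm (f (r k) - f (l k))) < e"
  proof (intro exI[of _ del] conjI allI impI del)
    fix N :: nat and l r :: "nat \<Rightarrow> real"
    assume "(\<forall>k<N. c \<le> l k \<and> l k \<le> r k \<and> r k \<le> d) \<and>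
        (\<forall>k<N. \<forall>j<N. k \<noteq> j \<longrightarrow> r k \<le> l j \<or> r j \<le> l k) \<and> (\<Sum>k<N. r k - l k) < del"
    thus "(\<Sum>k<N. norm (f (r k) - f (l k))) < e" using H[of N l r] assms(2,3) by force
  qed
qed

lemma ac_cont:
  assumes ac: "abs_continuous_on a b f"
  shows "continuous_on {a..b} f"
  unfolding continuous_on_iff
proof (intro ballI allI impI)
  fix x e assume x: "x \<in> {a..b}" and e: "(e::real) > 0"
  obtain d where d: "d > 0" and H: "\<And>(N::nat) l r. (\<forall>k<N. a \<le> l k \<and> l k \<le> r k \<and> r k \<le> b) \<and>
        (\<forall>k<N. \<forall>j<N. k \<noteq> j \<longrightarrow> r k \<le> l j \<or> r j \<le> l k) \<and> (\<Sum>k<N. r k - l k) < d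
        \<longrightarrow> (\<Sum>k<N. norm (f (r k) - f (l k))) < e"
    using ac e unfolding abs_continuous_on_def by blast
  show "\<exists>d>0. \<forall>y\<in>{a..b}. dist y x < d \<longrightarrow> dist (f y) (f x) < e"
  proof (intro exI[of _ d] conjI ballI impI d)
    fix y assume y: "y \<in> {a..b}" and yd: "dist y x < d"
    have "(\<Sum>k<Suc 0. norm (f ((\<lambda>_. max x y) k) - f ((\<lambda>_. min x y) k))) < e"
      using H[of "Suc 0" "\<lambda>_. min x y" "\<lambda>_. max x y"] x y yd by (auto simp: dist_real_def)
    thus "dist (f y) (f x) < e"
      by (cases "x \<le> y") (auto simp: dist_norm max_def min_def norm_minus_commute)
  qed
qed

lemma ac_lipschitz:
  fixes f :: "real \<Rightarrow> 'a::real_normed_vector"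
  assumes L: "\<And>x y. x \<in> {a..b} \<Longrightarrow> y \<in> {a..b} \<Longrightarrow> norm (f x - f y) \<le> L * \<bar>x - y\<bar>"
  shows "abs_continuous_on a b f"
  unfolding abs_continuous_on_def
proof (intro allI impI)
  fix e :: real assume e: "e > 0"
  define L' where "L' = \<bar>L\<bar> + 1"
  have L'0: "L' > 0" unfolding L'_def by simp
  show "\<exists>d>0. \<forall>(N::nat) l r. (\<forall>k<N. a \<le> l k \<and> l k \<le> r k \<and> r k \<le> b) \<and>
        (\<forall>k<N. \<forall>j<N. k \<noteq> j \<longrightarrow> r k \<le> l j \<or> r j \<le> l k) \<and> (\<Sum>k<N. r k - l k) < d
        \<longrightarrow> (\<Sum>k<N. norm (f (r k) - f (l k))) < e"
  proof (intro exI[of _ "e / L'"] conjI allI impI)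
    show "e / L' > 0" using e L'0 by simp
    fix N :: nat and l r :: "nat \<Rightarrow> real"
    assume H: "(\<forall>k<N. a \<le> l k \<and> l k \<le> r k \<and> r k \<le> b) \<and>
        (\<forall>k<N. \<forall>j<N. k \<noteq> j \<longrightarrow> r k \<le> l j \<or> r j \<le> l k) \<and> (\<Sum>k<N. r k - l k) < e / L'"
    have "(\<Sum>k<N. norm (f (r k) - f (l k))) \<le> (\<Sum>k<N. L' * (r k - l k))"
    proof (rule sum_mono)
      fix k assume "k \<in> {..<N}"
      hence k: "a \<le> l k" "l k \<le> r k" "r k \<le> b" using H by auto
      have "norm (f (r k) - f (l k)) \<le> L * \<bar>r k - l k\<bar>" using L[of "r k" "l k"] k by simp
      also have "\<dots> \<le> L' * (r k - l k)" unfolding L'_def using k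
        by (simp add: abs_le_iff mult_right_mono)
      finally show "norm (f (r k) - f (l k)) \<le> L' * (r k - l k)" .
    qed
    also have "\<dots> = L' * (\<Sum>k<N. r k - l k)" by (simp add: sum_distrib_left)
    also have "\<dots> < L' * (e / L')" using H L'0 by (intro mult_strict_left_mono) auto
    also have "\<dots> = e" using L'0 by simp
    finally show "(\<Sum>k<N. norm (f (r k) - f (l k))) < e" .
  qed
qed

lemma ac_bilinear:
  assumes bb: "bounded_bilinear pr"
    and f: "abs_continuous_on a b f" and g: "abs_continuous_on a b g"
  shows "abs_continuous_on a b (\<lambda>s. pr (f s) (g s))"
proof -
  obtain K where K: "K > 0" "\<And>x y. norm (pr x y) \<le> norm x * norm y * K"
    using bounded_bilinear.pos_bounded[OF bb] by auto
  have "compact (f ` {a..b})" using ac_cont[OF f] by (intro compact_continuous_image) auto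
  then obtain Bf where Bf: "Bf > 0" "\<And>s. s \<in> {a..b} \<Longrightarrow> norm (f s) \<le> Bf"
    using compact_imp_bounded bounded_pos by (metis imageI)
  have "compact (g ` {a..b})" using ac_cont[OF g] by (intro compact_continuous_image) auto
  then obtain Bg where Bg: "Bg > 0" "\<And>s. s \<in> {a..b} \<Longrightarrow> norm (g s) \<le> Bg"
    using compact_imp_bounded bounded_pos by (metis imageI)
  show ?thesis unfolding abs_continuous_on_def
  proof (intro allI impI)
    fix e :: real assume e: "e > 0"
    define ef where "ef = e / (2 * K * Bg)"
    define eg where "eg = e / (2 * K * Bf)"
    have ef0: "ef > 0" and eg0: "eg > 0" unfolding ef_def eg_def using e K Bf Bg by auto
    obtain df where df: "df > 0" and Hf: "\<And>(N::nat) l r. (\<forall>k<N. a \<le> l k \<and> l k \<le> r k \<and> r k \<le> b) \<and>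
        (\<forall>k<N. \<forall>j<N. k \<noteq> j \<longrightarrow> r k \<le> l j \<or> r j \<le> l k) \<and> (\<Sum>k<N. r k - l k) < df
        \<longrightarrow> (\<Sum>k<N. norm (f (r k) - f (l k))) < ef"
      using f ef0 unfolding abs_continuous_on_def by blast
    obtain dg where dg: "dg > 0" and Hg: "\<And>(N::nat) l r. (\<forall>k<N. a \<le> l k \<and> l k \<le> r k \<and> r k \<le> b) \<and>
        (\<forall>k<N. \<forall>j<N. k \<noteq> j \<longrightarrow> r k \<le> l j \<or> r j \<le> l k) \<and> (\<Sum>k<N. r k - l k) < dg
        \<longrightarrow> (\<Sum>k<N. norm (g (r k) - g (l k))) < eg"
      using g eg0 unfolding abs_continuous_on_def by blast
    show "\<exists>d>0. \<forall>(N::nat) l r. (\<forall>k<N. a \<le> l k \<and> l k \<le> r k \<and> r k \<le> b) \<and>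
        (\<forall>k<N. \<forall>j<N. k \<noteq> j \<longrightarrow> r k \<le> l j \<or> r j \<le> l k) \<and> (\<Sum>k<N. r k - l k) < d
        \<longrightarrow> (\<Sum>k<N. norm (pr (f (r k)) (g (r k)) - pr (f (l k)) (g (l k)))) < e"
    proof (intro exI[of _ "min df dg"] conjI allI impI)
      show "min df dg > 0" using df dg by simp
      fix N :: nat and l r :: "nat \<Rightarrow> real"
      assume H: "(\<forall>k<N. a \<le> l k \<and> l k \<le> r k \<and> r k \<le> b) \<and>
        (\<forall>k<N. \<forall>j<N. k \<noteq> j \<longrightarrow> r k \<le> l j \<or> r j \<le> l k) \<and> (\<Sum>k<N. r k - l k) < min df dg"
      have sf: "(\<Sum>k<N. norm (f (r k) - f (l k))) < ef" using Hf[of N l r] H by auto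
      have sg: "(\<Sum>k<N. norm (g (r k) - g (l k))) < eg" using Hg[of N l r] H by auto
      have "(\<Sum>k<N. norm (pr (f (r k)) (g (r k)) - pr (f (l k)) (g (l k))))
          \<le> (\<Sum>k<N. K * Bg * norm (f (r k) - f (l k)) + K * Bf * norm (g (r k) - g (l k)))"
      proof (rule sum_mono)
        fix k assume "k \<in> {..<N}"
        hence k: "r k \<in> {a..b}" "l k \<in> {a..b}" using H by auto
        have eq: "pr (f (r k)) (g (r k)) - pr (f (l k)) (g (l k))
            = pr (f (r k) - f (l k)) (g (r k)) + pr (f (l k)) (g (r k) - g (l k))"
          by (simp add: bounded_bilinear.diff_left[OF bb] bounded_bilinear.diff_right[OF bb])
        have "norm (pr (f (r k) - f (l k)) (g (r k))) \<le> norm (f (r k) - f (l k)) * norm (g (r k)) * K" by (rule K)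
        also have "\<dots> \<le> norm (f (r k) - f (l k)) * Bg * K"
          using Bg(2)[OF k(1)] K by (intro mult_right_mono mult_left_mono) auto
        finally have n1: "norm (pr (f (r k) - f (l k)) (g (r k))) \<le> K * Bg * norm (f (r k) - f (l k))"
          by (simp add: ac_simps)
        have "norm (pr (f (l k)) (g (r k) - g (l k))) \<le> norm (f (l k)) * norm (g (r k) - g (l k)) * K" by (rule K)
        also have "\<dots> \<le> Bf * norm (g (r k) - g (l k)) * K"
          using Bf(2)[OF k(2)] K by (intro mult_right_mono) auto
        finally have n2: "norm (pr (f (l k)) (g (r k) - g (l k))) \<le> K * Bf * norm (g (r k) - g (l k))"
          by (simp add: ac_simps)
        show "norm (pr (f (r k)) (g (r k)) - pr (f (l k)) (g (l k)))
            \<le> K * Bg * norm (f (r k) - f (l k)) + K * Bf * norm (g (r k) - g (l k))"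
          unfolding eq using norm_triangle_ineq n1 n2 by (smt (verit))
      qed
      also have "\<dots> = K * Bg * (\<Sum>k<N. norm (f (r k) - f (l k))) + K * Bf * (\<Sum>k<N. norm (g (r k) - g (l k)))"
        by (simp add: sum.distrib sum_distrib_left)
      also have "\<dots> < K * Bg * ef + K * Bf * eg"
        using sf sg K Bf Bg by (intro add_strict_mono mult_strict_left_mono) auto
      also have "\<dots> = e" unfolding ef_def eg_def using K Bf Bg by (simp add: field_simps)
      finally show "(\<Sum>k<N. norm (pr (f (r k)) (g (r k)) - pr (f (l k)) (g (l k)))) < e" .
    qed
  qed
qed

lemma ac_add:
  fixes f g :: "real \<Rightarrow> 'a::real_normed_vector"
  assumes f: "abs_continuous_on a b f" and g: "abs_continuous_on a b g"
  shows "abs_continuous_on a b (\<lambda>s. f s + g s)"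
  unfolding abs_continuous_on_def
proof (intro allI impI)
  fix e :: real assume e: "e > 0"
  have e2: "e/2 > 0" using e by simp
  obtain df where df: "df > 0" and Hf: "\<And>(N::nat) l r. (\<forall>k<N. a \<le> l k \<and> l k \<le> r k \<and> r k \<le> b) \<and>
        (\<forall>k<N. \<forall>j<N. k \<noteq> j \<longrightarrow> r k \<le> l j \<or> r j \<le> l k) \<and> (\<Sum>k<N. r k - l k) < df
        \<longrightarrow> (\<Sum>k<N. norm (f (r k) - f (l k))) < e/2"
    using f e2 unfolding abs_continuous_on_def by blast
  obtain dg where dg: "dg > 0" and Hg: "\<And>(N::nat) l r. (\<forall>k<N. a \<le> l k \<and> l k \<le> r k \<and> r k \<le> b) \<and>
        (\<forall>k<N. \<forall>j<N. k \<noteq> j \<longrightarrow> r k \<le> l j \<or> r j \<le> l k) \<and> (\<Sum>k<N. r k - l k) < dg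
        \<longrightarrow> (\<Sum>k<N. norm (g (r k) - g (l k))) < e/2"
    using g e2 unfolding abs_continuous_on_def by blast
  show "\<exists>d>0. \<forall>(N::nat) l r. (\<forall>k<N. a \<le> l k \<and> l k \<le> r k \<and> r k \<le> b) \<and>
        (\<forall>k<N. \<forall>j<N. k \<noteq> j \<longrightarrow> r k \<le> l j \<or> r j \<le> l k) \<and> (\<Sum>k<N. r k - l k) < d
        \<longrightarrow> (\<Sum>k<N. norm ((f (r k) + g (r k)) - (f (l k) + g (l k)))) < e"
  proof (intro exI[of _ "min df dg"] conjI allI impI)
    show "min df dg > 0" using df dg by simp
    fix N :: nat and l r :: "nat \<Rightarrow> real"
    assume H: "(\<forall>k<N. a \<le> l k \<and> l k \<le> r k \<and> r k \<le> b) \<and>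
        (\<forall>k<N. \<forall>j<N. k \<noteq> j \<longrightarrow> r k \<le> l j \<or> r j \<le> l k) \<and> (\<Sum>k<N. r k - l k) < min df dg"
    have sf: "(\<Sum>k<N. norm (f (r k) - f (l k))) < e/2" using Hf[of N l r] H by auto
    have sg: "(\<Sum>k<N. norm (g (r k) - g (l k))) < e/2" using Hg[of N l r] H by auto
    have "(\<Sum>k<N. norm ((f (r k) + g (r k)) - (f (l k) + g (l k))))
        \<le> (\<Sum>k<N. norm (f (r k) - f (l k)) + norm (g (r k) - g (l k)))"
      by (rule sum_mono) (metis add_diff_add norm_triangle_ineq)
    also have "\<dots> < e" using sf sg by (simp add: sum.distrib)
    finally show "(\<Sum>k<N. norm ((f (r k) + g (r k)) - (f (l k) + g (l k)))) < e" .
  qed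
qed

lemma ac_scale:
  fixes f :: "real \<Rightarrow> 'a::real_normed_vector"
  assumes f: "abs_continuous_on a b f"
  shows "abs_continuous_on a b (\<lambda>s. c *\<^sub>R f s)"
  using ac_bilinear[OF bounded_bilinear_scaleR ac_lipschitz[of a b "\<lambda>_. c" 0] f] by simp

lemma ac_diff:
  fixes f g :: "real \<Rightarrow> 'a::real_normed_vector"
  assumes f: "abs_continuous_on a b f" and g: "abs_continuous_on a b g"
  shows "abs_continuous_on a b (\<lambda>s. f s - g s)"
  using ac_add[OF f ac_scale[OF g, of "-1"]] by simp

lemma ac_const: "abs_continuous_on a b (\<lambda>_. c::'a::real_normed_vector)"
  by (rule ac_lipschitz[of a b _ 0]) simp


lemma disjoint_intervals_order:
  fixes c d c' d' :: real
  assumes "c < d" "c' < d'" "{c<..<d} \<inter> {c'<..<d'} = {}"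
  shows "d \<le> c' \<or> d' \<le> c"
proof (rule ccontr)
  assume "\<not> (d \<le> c' \<or> d' \<le> c)"
  hence "max c c' < min d d'" using assms by auto
  hence "(max c c' + min d d') / 2 \<in> {c<..<d} \<inter> {c'<..<d'}" by auto
  thus False using assms(3) by blast
qed

lemma ac_image_negligible:
  fixes g :: "real \<Rightarrow> real"
  assumes ac: "abs_continuous_on a b g" and N: "negligible N" "N \<subseteq> {a..b}"
  shows "negligible (g ` N)"
proof (cases "a < b")
  case False
  hence "N \<subseteq> {a}" using N(2) by auto
  hence "g ` N \<subseteq> {g a}" by auto
  thus ?thesis by (meson finite.emptyI finite_insert negligible_finite negligible_subset)
next
  case True
  have cont: "continuous_on {a..b} g" by (rule ac_cont[OF ac])
  show ?thesis unfolding negligible_outer_le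
  proof (intro allI impI)
    fix e :: real assume e: "e > 0"
    obtain del where del: "del > 0" and H: "\<And>(N::nat) l r. (\<forall>k<N. a \<le> l k \<and> l k \<le> r k \<and> r k \<le> b) \<and>
        (\<forall>k<N. \<forall>j<N. k \<noteq> j \<longrightarrow> r k \<le> l j \<or> r j \<le> l k) \<and> (\<Sum>k<N. r k - l k) < del
        \<longrightarrow> (\<Sum>k<N. norm (g (r k) - g (l k))) < e"
      using ac e unfolding abs_continuous_on_def by blast
    have Nm: "N \<in> lmeasurable" using N(1) negligible_imp_measurable by blast
    have NS: "N \<subseteq> cbox a b" using N(2) by simp
    have d2: "del/2 > 0" using del by simp
    obtain D where Dc: "countable D" and DK: "\<And>K. K \<in> D \<Longrightarrow> K \<subseteq> cbox a b \<and> K \<noteq> {} \<and> (\<exists>c d. K = cbox c d)"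
      and Dp: "pairwise (\<lambda>A B. interior A \<inter> interior B = {}) D"
      and "\<And>u v. cbox u v \<in> D \<Longrightarrow> \<exists>n. \<forall>i \<in> Basis. v \<bullet> i - u \<bullet> i = (b \<bullet> i - a \<bullet> i)/2^n"
      and Dint: "\<And>K. K \<in> D \<Longrightarrow> box a b \<noteq> {} \<Longrightarrow> interior K \<noteq> {}"
      and Dcov: "N \<subseteq> \<Union>D" and Dm: "\<Union>D \<in> lmeasurable"
      and Dmeas: "measure lebesgue (\<Union>D) \<le> measure lebesgue N + del/2"
      by (rule measurable_outer_intervals_bounded[OF Nm NS d2]) blast
    have mN: "measure lebesgue N = 0" using N(1) negligible_imp_measure0 by blast
    have box: "box a b \<noteq> {}" using True by simp
    have "\<forall>K\<in>D. \<exists>c d. c < d \<and> K = {c..d}"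
    proof
      fix K assume K: "K \<in> D"
      then obtain c d where "K = cbox c d" using DK by blast
      hence Kcd: "K = {c..d}" by simp
      have "interior K \<noteq> {}" using Dint[OF K box] .
      hence "c < d" unfolding Kcd by auto
      thus "\<exists>c d. c < d \<and> K = {c..d}" using Kcd by blast
    qed
    then obtain cc dd where cd: "\<And>K. K \<in> D \<Longrightarrow> cc K < dd K \<and> K = {cc K..dd K}" by metis
    have cdm: "x \<in> K \<longleftrightarrow> cc K \<le> x \<and> x \<le> dd K" if "K \<in> D" for K x
      using cd[OF that] by (metis atLeastAtMost_iff)
    have Kab: "K \<subseteq> {a..b}" if "K \<in> D" for K using DK[OF that] by simp
    have "\<forall>K\<in>D. \<exists>p\<in>K. \<exists>q\<in>K. \<forall>x\<in>K. g p \<le> g x \<and> g x \<le> g q"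
    proof
      fix K assume K: "K \<in> D"
      have cK: "compact K" using cd[OF K] by (metis compact_Icc)
      have neK: "K \<noteq> {}" using cd[OF K] by (metis atLeastAtMost_iff empty_iff less_imp_le order_refl)
      have gK: "continuous_on K g" using continuous_on_subset[OF cont Kab[OF K]] .
      obtain p where "p \<in> K" "\<forall>x\<in>K. g p \<le> g x" using continuous_attains_inf[OF cK neK gK] by blast
      moreover obtain q where "q \<in> K" "\<forall>x\<in>K. g x \<le> g q" using continuous_attains_sup[OF cK neK gK] by blast
      ultimately show "\<exists>p\<in>K. \<exists>q\<in>K. \<forall>x\<in>K. g p \<le> g x \<and> g x \<le> g q" by blast
    qed
    then obtain p q where pq: "\<And>K. K \<in> D \<Longrightarrow> p K \<in> K \<and> q K \<in> K \<and> (\<forall>x\<in>K. g (p K) \<le> g x \<and> g x \<le> g (q K))"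
      by metis
    define I where "I K = {g (p K)..g (q K)}" for K
    define T where "T = \<Union>(I ` D)"
    have ordD: "dd K \<le> cc K' \<or> dd K' \<le> cc K" if "K \<in> D" "K' \<in> D" "K \<noteq> K'" for K K'
    proof -
      have "interior K \<inter> interior K' = {}" using Dp that unfolding pairwise_def by blast
      moreover have "interior K = {cc K<..<dd K}" using cd[OF that(1)] by (metis interior_atLeastAtMost_real)
      moreover have "interior K' = {cc K'<..<dd K'}" using cd[OF that(2)] by (metis interior_atLeastAtMost_real)
      moreover have "cc K < dd K" "cc K' < dd K'" using cd[OF that(1)] cd[OF that(2)] by auto
      ultimately show ?thesis using disjoint_intervals_order[of "cc K" "dd K" "cc K'" "dd K'"] by simp
    qed
    have key: "(\<Sum>K\<in>F'. g (q K) - g (p K)) < e" if F': "F' \<subseteq> D" "finite F'" for F'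
    proof -
      obtain h where h: "bij_betw h {0..<card F'} F'" using ex_bij_betw_nat_finite[OF F'(2)] by blast
      define n where "n = card F'"
      have hn: "bij_betw h {..<n} F'" using h unfolding n_def by (simp add: atLeast0LessThan)
      have hD: "h k \<in> D" if "k < n" for k using hn F'(1) that unfolding bij_betw_def by auto
      define l where "l k = min (p (h k)) (q (h k))" for k
      define r where "r k = max (p (h k)) (q (h k))" for k
      have lrK: "l k \<in> h k \<and> r k \<in> h k" if "k < n" for k
        using pq[OF hD[OF that]] unfolding l_def r_def by (simp add: min_def max_def)
      have c1: "\<forall>k<n. a \<le> l k \<and> l k \<le> r k \<and> r k \<le> b"
      proof (intro allI impI)
        fix k assume k: "k < n"
        have "l k \<in> {a..b}" "r k \<in> {a..b}" using lrK[OF k] Kab[OF hD[OF k]] by auto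
        moreover have "l k \<le> r k" unfolding l_def r_def by simp
        ultimately show "a \<le> l k \<and> l k \<le> r k \<and> r k \<le> b" by auto
      qed
      have c2: "\<forall>k<n. \<forall>j<n. k \<noteq> j \<longrightarrow> r k \<le> l j \<or> r j \<le> l k"
      proof (intro allI impI)
        fix k j assume kj: "k < n" "j < n" "k \<noteq> j"
        have ne: "h k \<noteq> h j" using hn kj unfolding bij_betw_def inj_on_def by auto
        have "r k \<le> dd (h k)" "cc (h k) \<le> l k" "r j \<le> dd (h j)" "cc (h j) \<le> l j"
          using lrK[OF kj(1)] lrK[OF kj(2)] cdm[OF hD[OF kj(1)]] cdm[OF hD[OF kj(2)]] by auto
        thus "r k \<le> l j \<or> r j \<le> l k" using ordD[OF hD[OF kj(1)] hD[OF kj(2)] ne] by linarith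
      qed
      have meq: "measure lebesgue K = dd K - cc K" if "K \<in> D" for K
      proof -
        have Ke: "K = {cc K..dd K}" and le: "cc K \<le> dd K" using cd[OF that] by auto
        have "measure lebesgue {cc K..dd K} = dd K - cc K" using le by simp
        thus ?thesis using Ke by metis
      qed
      have "(\<Sum>k<n. r k - l k) \<le> (\<Sum>k<n. dd (h k) - cc (h k))"
      proof (rule sum_mono)
        fix k assume "k \<in> {..<n}"
        hence k: "k < n" by simp
        show "r k - l k \<le> dd (h k) - cc (h k)" using lrK[OF k] cdm[OF hD[OF k]] by auto
      qed
      also have "\<dots> = (\<Sum>K\<in>F'. dd K - cc K)" using sum.reindex_bij_betw[OF hn, of "\<lambda>K. dd K - cc K"] by simp
      also have "\<dots> = (\<Sum>K\<in>F'. measure lebesgue K)" using meq F'(1) by (intro sum.cong) auto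
      also have "\<dots> = measure lebesgue (\<Union>F')"
      proof (rule measure_negligible_finite_Union[symmetric, OF F'(2)])
        show "\<And>S. S \<in> F' \<Longrightarrow> S \<in> lmeasurable" using F'(1) cd by (metis lmeasurable_cbox cbox_interval subsetD)
        show "pairwise (\<lambda>S T. negligible (S \<inter> T)) F'"
          unfolding pairwise_def
        proof (intro ballI impI)
          fix K K' assume KK: "K \<in> F'" "K' \<in> F'" "K \<noteq> K'"
          hence KD: "K \<in> D" "K' \<in> D" using F'(1) by auto
          have "K \<inter> K' \<subseteq> {dd K, dd K'}" using ordD[OF KD KK(3)] cdm[OF KD(1)] cdm[OF KD(2)] by force
          thus "negligible (K \<inter> K')" by (meson finite.emptyI finite_insert negligible_finite negligible_subset)
        qed
      qed
      also have "\<dots> \<le> measure lebesgue (\<Union>D)"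
      proof (rule measure_mono_fmeasurable)
        show "\<Union>F' \<subseteq> \<Union>D" using F'(1) by auto
        have "\<And>K. K \<in> F' \<Longrightarrow> K \<in> sets lebesgue" using F'(1) cd by (metis lmeasurable_cbox cbox_interval subsetD fmeasurableD)
        thus "\<Union>F' \<in> sets lebesgue" using F'(2) by (intro sets.finite_Union) auto
        show "\<Union>D \<in> fmeasurable lebesgue" using Dm .
      qed
      also have "\<dots> < del" using Dmeas mN del by simp
      finally have c3: "(\<Sum>k<n. r k - l k) < del" .
      have "(\<Sum>k<n. norm (g (r k) - g (l k))) < e" using H[of n l r] c1 c2 c3 by blast
      moreover have "norm (g (r k) - g (l k)) = g (q (h k)) - g (p (h k))" if "k < n" for k
      proof -
        have "g (p (h k)) \<le> g (q (h k))" using pq[OF hD[OF that]] by blast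
        thus ?thesis unfolding l_def r_def by (auto simp: max_def min_def)
      qed
      ultimately have "(\<Sum>k<n. g (q (h k)) - g (p (h k))) < e" by simp
      thus ?thesis using sum.reindex_bij_betw[OF hn, of "\<lambda>K. g (q K) - g (p K)"] by simp
    qed
    have Ifm: "I K \<in> fmeasurable lebesgue" for K unfolding I_def by simp
    have fin_bound: "measure lebesgue (\<Union>F) \<le> e" if FD: "F \<subseteq> I ` D" and finF: "finite F" for F
    proof -
      obtain F' where F': "F' \<subseteq> D" "finite F'" "F = I ` F'" using finite_subset_image[OF finF FD] by blast
      have "measure lebesgue (\<Union>F) \<le> (\<Sum>K\<in>F'. measure lebesgue (I K))"
        unfolding F'(3) using measure_UNION_le[OF F'(2), of I lebesgue] Ifm by simp
      also have "\<dots> = (\<Sum>K\<in>F'. g (q K) - g (p K))"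
      proof (rule sum.cong[OF refl])
        fix K assume "K \<in> F'"
        hence "g (p K) \<le> g (q K)" using pq F'(1) by blast
        thus "measure lebesgue (I K) = g (q K) - g (p K)" unfolding I_def by simp
      qed
      also have "\<dots> < e" using key[OF F'(1,2)] .
      finally show ?thesis by simp
    qed
    show "\<exists>T. g ` N \<subseteq> T \<and> T \<in> lmeasurable \<and> measure lebesgue T \<le> e"
    proof (intro exI[of _ T] conjI)
      show "g ` N \<subseteq> T"
      proof
        fix y assume "y \<in> g ` N"
        then obtain x where x: "x \<in> N" "y = g x" by blast
        then obtain K where K: "K \<in> D" "x \<in> K" using Dcov by blast
        hence "y \<in> I K" using pq[OF K(1)] x unfolding I_def by auto
        thus "y \<in> T" unfolding T_def using K by blast
      qed
      show "T \<in> lmeasurable" unfolding T_def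
        using fmeasurable_Union_bound[OF countable_image[OF Dc] _ fin_bound] Ifm by blast
      show "measure lebesgue T \<le> e" unfolding T_def
        using measure_Union_bound[OF countable_image[OF Dc] _ fin_bound] Ifm by blast
    qed
  qed
qed

lemma ac_mono:
  fixes g :: "real \<Rightarrow> real"
  assumes ac: "abs_continuous_on a b g" and ab: "a \<le> b"
    and der: "AE s in lebesgue. s \<in> {a<..<b} \<longrightarrow> (\<exists>D\<ge>0. (g has_real_derivative D) (at s))"
  shows "g a \<le> g b"
proof -
  obtain N0 where N0: "N0 \<in> null_sets lebesgue"
    "{s \<in> space lebesgue. \<not> (s \<in> {a<..<b} \<longrightarrow> (\<exists>D\<ge>0. (g has_real_derivative D) (at s)))} \<subseteq> N0"
    using der unfolding eventually_ae_filter by blast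
  define N where "N = (N0 \<inter> {a..b}) \<union> {a, b}"
  have negN: "negligible N" unfolding N_def
  proof (rule negligible_Un)
    have "negligible N0" using N0(1) by (simp add: negligible_iff_null_sets)
    thus "negligible (N0 \<inter> {a..b})" by (rule negligible_subset) auto
    show "negligible {a, b}" by (rule negligible_finite) simp
  qed
  have NS: "N \<subseteq> {a..b}" unfolding N_def using ab by auto
  have derN: "\<exists>D\<ge>0. (g has_real_derivative D) (at s)" if "s \<in> {a..b}" "s \<notin> N" for s
  proof -
    have "s \<in> {a<..<b}" and "s \<notin> N0" using that unfolding N_def by auto
    show ?thesis
    proof (rule ccontr)
      assume "\<not> ?thesis"
      hence "s \<in> {s \<in> space lebesgue. \<not> (s \<in> {a<..<b} \<longrightarrow> (\<exists>D\<ge>0. (g has_real_derivative D) (at s)))}"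
        using \<open>s \<in> {a<..<b}\<close> by simp
      with N0(2) have "s \<in> N0" by (rule subsetD)
      thus False using \<open>s \<notin> N0\<close> by simp
    qed
  qed
  have main: "g a + \<epsilon> * a \<le> g b + \<epsilon> * b" if \<epsilon>: "\<epsilon> > 0" for \<epsilon>
  proof (rule ccontr)
    define h where "h s = g s + \<epsilon> * s" for s
    assume "\<not> (g a + \<epsilon> * a \<le> g b + \<epsilon> * b)"
    hence hab: "h b < h a" unfolding h_def by simp
    have lip: "abs_continuous_on a b (\<lambda>s. \<epsilon> * s)"
      by (rule ac_lipschitz[of a b _ \<epsilon>]) (use \<epsilon> in \<open>simp add: abs_mult flip: right_diff_distrib\<close>)
    have ach: "abs_continuous_on a b h" unfolding h_def using ac_add[OF ac lip] .
    have conth: "continuous_on {a..b} h" by (rule ac_cont[OF ach])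
    have negh: "negligible (h ` N)" by (rule ac_image_negligible[OF ach negN NS])
    have "\<not> negligible {h b<..<h a}" by (rule open_not_negligible) (use hab in auto)
    hence "\<not> {h b<..<h a} \<subseteq> h ` N" using negh negligible_subset by metis
    then obtain y where y: "y \<in> {h b<..<h a}" "y \<notin> h ` N" by (auto simp: subset_eq)
    define A where "A = {a..b} \<inter> h -` {y..}"
    have aA: "a \<in> A" using y ab unfolding A_def by auto
    have closedA: "closed A" unfolding A_def by (rule continuous_closed_preimage[OF conth]) auto
    have bddA: "bdd_above A" unfolding A_def by (rule bdd_aboveI[of _ b]) auto
    define c where "c = Sup A"
    have cA: "c \<in> A" unfolding c_def using closed_contains_Sup[OF _ bddA closedA] aA by blast
    have ub: "s \<le> c" if "s \<in> A" for s unfolding c_def using cSup_upper[OF that bddA] .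
    have cab: "a \<le> c" "c \<le> b" "y \<le> h c" using cA ub[OF aA] unfolding A_def by auto
    have after: "h s < y" if "c < s" "s \<le> b" for s
    proof (rule ccontr)
      assume "\<not> h s < y"
      hence "s \<in> A" unfolding A_def using that cab by auto
      thus False using ub that by fastforce
    qed
    have cb: "c < b"
    proof (rule ccontr)
      assume "\<not> c < b"
      hence "c = b" using cab by simp
      thus False using cab(3) y(1) by simp
    qed
    have hc: "h c = y"
    proof (rule ccontr)
      assume "h c \<noteq> y"
      hence "y < h c" using cab by simp
      have "continuous_on {c..b} h" using continuous_on_subset[OF conth] cab by auto
      then obtain s where s: "c \<le> s" "s \<le> b" "h s = y"
        using IVT2'[of h b y c] y(1) cab \<open>y < h c\<close> by auto
      hence "c < s" using \<open>h c \<noteq> y\<close> by (cases "c = s") auto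
      thus False using after s by auto
    qed
    have ca: "a < c"
    proof (rule ccontr)
      assume "\<not> a < c"
      hence "c = a" using cab by simp
      thus False using hc y(1) by simp
    qed
    have "c \<notin> N" using hc y(2) by blast
    then obtain D where D: "D \<ge> 0" "(g has_real_derivative D) (at c)" using derN cab by auto
    have "(h has_real_derivative (D + \<epsilon>)) (at c)" unfolding h_def
      using D(2) by (auto intro!: derivative_eq_intros)
    moreover have "D + \<epsilon> > 0" using D \<epsilon> by simp
    ultimately obtain d where d: "d > 0" "\<And>t. t > 0 \<Longrightarrow> t < d \<Longrightarrow> h c < h (c + t)"
      using DERIV_pos_inc_right by blast
    define m where "m = min d (b - c)"
    define t where "t = m / 2"
    have m: "m \<le> b - c" "m \<le> d" "m > 0" unfolding m_def using d cb by auto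
    have t1: "t > 0" unfolding t_def using m by linarith
    have t2: "t < d" unfolding t_def using m by linarith
    have t3: "c + t \<le> b" unfolding t_def using m by linarith
    note t = t1 t2 t3
    have "h c < h (c + t)" using d(2) t by auto
    moreover have "h (c + t) < y" using after t by auto
    ultimately show False using hc by simp
  qed
  show ?thesis
  proof (cases "a = b")
    case True thus ?thesis by simp
  next
    case False
    hence ab': "a < b" using ab by simp
    show ?thesis
    proof (rule ccontr)
      assume "\<not> g a \<le> g b"
      define \<epsilon> where "\<epsilon> = (g a - g b) / (2 * (b - a))"
      have e0: "\<epsilon> > 0" unfolding \<epsilon>_def using ab' \<open>\<not> g a \<le> g b\<close> by simp
      have "g a - g b \<le> \<epsilon> * (b - a)" using main[OF e0] by (simp add: algebra_simps)
      also have "\<dots> = (g a - g b) / 2" unfolding \<epsilon>_def using ab' by (simp add: field_simps)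
      finally show False using \<open>\<not> g a \<le> g b\<close> by simp
    qed
  qed
qed


lemma neg_mv: "(- (A::real^'n^'m)) *v x = - (A *v x)"
  by (simp add: matrix_vector_mult_def vec_eq_iff sum_negf)

lemma dV_algebra:
  fixes A Q M :: "real^'n^'n" and B :: "real^'m^'n" and P :: "real^'m^'m"
    and w :: "real^'n" and u p :: "real^'m"
  assumes symQ: "transpose Q = Q" and symM: "transpose M = M" and QM: "Q ** M = mat 1"
    and k: "k \<noteq> 0"
  defines "c \<equiv> M *v w"
  defines "d \<equiv> transpose B *v c"
  shows "w \<bullet> (M *v (A *v w + B *v (u - p)) + (- (M ** (A ** Q + Q ** transpose A
            - ((1 / k) *\<^sub>R (B ** P ** transpose B) + k *\<^sub>R Q)) ** M)) *v w)
         + (A *v w + B *v (u - p)) \<bullet> (M *v w)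
       = 2 * (d \<bullet> (u - p)) + (d \<bullet> (P *v d)) / k + k * (w \<bullet> (M *v w))"
proof -
  let ?DQ = "A ** Q + Q ** transpose A - ((1 / k) *\<^sub>R (B ** P ** transpose B) + k *\<^sub>R Q)"
  let ?w' = "A *v w + B *v (u - p)"
  have Qc: "Q *v c = w" unfolding c_def by (simp add: matrix_vector_mul_assoc QM)
  have Bc: "c \<bullet> (B *v v) = d \<bullet> v" for v unfolding d_def by (rule inner_mv_transpose)
  have T2: "w \<bullet> (M *v ?w') = c \<bullet> ?w'" unfolding c_def using sym_inner[OF symM] by simp
  have T1: "?w' \<bullet> (M *v w) = c \<bullet> ?w'" unfolding c_def by (simp add: inner_commute)
  have cw': "c \<bullet> ?w' = c \<bullet> (A *v w) + d \<bullet> (u - p)" by (simp add: inner_add_right Bc)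
  have DQc: "?DQ *v c = A *v w + Q *v (transpose A *v c) - ((1/k) *\<^sub>R (B *v (P *v d)) + k *\<^sub>R w)"
    by (simp add: matrix_vector_mult_add_rdistrib matrix_vector_mult_diff_rdistrib
        flip: matrix_vector_mul_assoc scaleR_matrix_vector_assoc del: transpose_matrix_vector)
      (simp add: Qc d_def del: transpose_matrix_vector)
  have a1: "c \<bullet> (Q *v (transpose A *v c)) = c \<bullet> (A *v w)"
  proof -
    have "c \<bullet> (Q *v (transpose A *v c)) = (Q *v c) \<bullet> (transpose A *v c)" using sym_inner[OF symQ] .
    also have "\<dots> = w \<bullet> (transpose A *v c)" using Qc by simp
    also have "\<dots> = (A *v w) \<bullet> c" using inner_mv_transpose[of w "transpose A" c] by simp
    finally show ?thesis by (simp add: inner_commute)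
  qed
  have a2: "c \<bullet> (B *v (P *v d)) = d \<bullet> (P *v d)" by (rule Bc)
  have a3: "c \<bullet> w = w \<bullet> (M *v w)" unfolding c_def by (simp add: inner_commute)
  have T3: "w \<bullet> ((- (M ** ?DQ ** M)) *v w) = - (c \<bullet> (?DQ *v c))"
  proof -
    have "(- (M ** ?DQ ** M)) *v w = - (M *v (?DQ *v c))"
      unfolding c_def by (simp add: matrix_vector_mul_assoc neg_mv matrix_mul_assoc)
    thus ?thesis using sym_inner[OF symM, of w "?DQ *v c"] unfolding c_def by simp
  qed
  have eDQ: "c \<bullet> (?DQ *v c) = 2 * (c \<bullet> (A *v w)) - (d \<bullet> (P *v d)) / k - k * (w \<bullet> (M *v w))"
    unfolding DQc using a1 a2 a3
    by (simp add: inner_add_right inner_diff_right algebra_simps del: transpose_matrix_vector)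
  have sp: "w \<bullet> (M *v ?w' + (- (M ** ?DQ ** M)) *v w) = w \<bullet> (M *v ?w') + w \<bullet> ((- (M ** ?DQ ** M)) *v w)"
    by (rule inner_add_right)
  show ?thesis using sp T1 T2 T3 cw' eDQ by linarith
qed


lemma continuous_mv[continuous_intros]: "continuous F f \<Longrightarrow> continuous F (\<lambda>x. (M::real^'n^'m) *v f x)"
  using bounded_linear.continuous[OF matrix_vector_mul_bounded_linear] by blast

lemma continuous_on_mv[continuous_intros]: "continuous_on S f \<Longrightarrow> continuous_on S (\<lambda>x. (M::real^'n^'m) *v f x)"
  using bounded_linear.continuous_on[OF matrix_vector_mul_bounded_linear] by blast

lemma quad_scale: "(s *\<^sub>R v) \<bullet> ((M::real^'n^'n) *v (s *\<^sub>R v)) = s^2 * (v \<bullet> (M *v v))"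
  by (simp add: matrix_vector_mult_scaleR power2_eq_square)

lemma ellipsoid_closed: "closed (ellipsoid q (Q::real^'n^'n))"
  unfolding ellipsoid_def
  by (rule closed_Collect_le) (intro continuous_intros)+

lemma ellipsoid_frontier_imp:
  assumes "x \<in> frontier (ellipsoid q (Q::real^'n^'n))"
  shows "(x - q) \<bullet> (matrix_inv Q *v (x - q)) = 1"
proof -
  have "x \<in> ellipsoid q Q" using assms ellipsoid_closed frontier_subset_closed by blast
  hence le: "(x - q) \<bullet> (matrix_inv Q *v (x - q)) \<le> 1" unfolding ellipsoid_def by simp
  have "x \<notin> interior (ellipsoid q Q)" using assms unfolding frontier_def by blast
  moreover have "open {y. (y - q) \<bullet> (matrix_inv Q *v (y - q)) < 1}"
    by (rule open_Collect_less) (intro continuous_intros)+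
  moreover have "{y. (y - q) \<bullet> (matrix_inv Q *v (y - q)) < 1} \<subseteq> ellipsoid q Q"
    unfolding ellipsoid_def by auto
  ultimately have "\<not> (x - q) \<bullet> (matrix_inv Q *v (x - q)) < 1"
    using interior_maximal by blast
  thus ?thesis using le by simp
qed

lemma ellipsoid_frontier_of:
  assumes F: "(x - q) \<bullet> (matrix_inv Q *v (x - q)) = 1"
  shows "x \<in> frontier (ellipsoid q (Q::real^'n^'n))"
proof -
  have xE: "x \<in> ellipsoid q Q" using F unfolding ellipsoid_def by simp
  have "x \<notin> interior (ellipsoid q Q)"
  proof
    assume "x \<in> interior (ellipsoid q Q)"
    then obtain e where e: "e > 0" "ball x e \<subseteq> ellipsoid q Q" using mem_interior by blast
    have xq: "x \<noteq> q" using F by auto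
    define \<tau> where "\<tau> = e / (2 * norm (x - q))"
    have \<tau>0: "\<tau> > 0" unfolding \<tau>_def using e xq by simp
    define y where "y = x + \<tau> *\<^sub>R (x - q)"
    have "dist x y = \<tau> * norm (x - q)" unfolding y_def by (simp add: dist_norm \<tau>0 less_imp_le)
    also have "\<dots> = e / 2" unfolding \<tau>_def using xq by simp
    finally have "y \<in> ball x e" using e by simp
    hence "y \<in> ellipsoid q Q" using e by blast
    moreover have "y - q = (1 + \<tau>) *\<^sub>R (x - q)" unfolding y_def by (simp add: algebra_simps)
    hence "(y - q) \<bullet> (matrix_inv Q *v (y - q)) = (1 + \<tau>)^2 * ((x - q) \<bullet> (matrix_inv Q *v (x - q)))"
      using quad_scale by metis
    hence "(y - q) \<bullet> (matrix_inv Q *v (y - q)) = (1 + \<tau>)^2" using F by simp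
    moreover have "(1 + \<tau>)^2 > 1" using \<tau>0 by (simp add: power2_eq_square algebra_simps add_pos_pos)
    ultimately show False unfolding ellipsoid_def by simp
  qed
  thus ?thesis using xE closure_subset unfolding frontier_def by blast
qed

lemma norm_msqrt_eq:
  assumes "spsd (M::real^'n^'n)"
  shows "norm (msqrt M *v y) = sqrt (y \<bullet> (M *v y))"
  using msqrt_norm[OF assms, of y] by (metis norm_ge_zero real_sqrt_unique)

lemma ellipsoid_CS:
  fixes P :: "real^'m^'m"
  assumes P: "spd P" and u: "u \<in> ellipsoid p P"
  shows "\<bar>d \<bullet> (u - p)\<bar> \<le> sqrt (d \<bullet> (P *v d))"
proof -
  define Pi where "Pi = matrix_inv P"
  have spdPi: "spd Pi" unfolding Pi_def using spd_inv[OF P] .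
  have symPi: "transpose Pi = Pi" using spdPi spd_def by auto
  have symP: "transpose P = P" using P spd_def by auto
  have invP: "invertible P" using spd_invertible[OF P] .
  have spsdPi: "spsd Pi" using spd_spsd[OF spdPi] .
  define R where "R = msqrt Pi"
  have RR: "R ** R = Pi" and sR: "spsd R" unfolding R_def using msqrt_props[OF spsdPi] by auto
  have symR: "transpose R = R" using sR spsd_def by auto
  define a where "a = P *v d"
  define b where "b = u - p"
  have "d \<bullet> b = (Pi *v a) \<bullet> b" unfolding a_def Pi_def using inv_mult_left[OF invP] by simp
  also have "\<dots> = a \<bullet> (Pi *v b)" using sym_inner[OF symPi] by simp
  also have "\<dots> = (R *v a) \<bullet> (R *v b)" using sym_inner[OF symR, of a "R *v b"]
    by (simp add: matrix_vector_mul_assoc RR)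
  finally have db: "d \<bullet> b = (R *v a) \<bullet> (R *v b)" .
  have na: "norm (R *v a) = sqrt (d \<bullet> (P *v d))"
  proof -
    have "norm (R *v a) = sqrt (a \<bullet> (Pi *v a))" unfolding R_def by (rule norm_msqrt_eq[OF spsdPi])
    also have "a \<bullet> (Pi *v a) = a \<bullet> d" unfolding a_def Pi_def using inv_mult_left[OF invP] by simp
    also have "\<dots> = d \<bullet> (P *v d)" unfolding a_def by (simp add: inner_commute)
    finally show ?thesis .
  qed
  have nb: "norm (R *v b) \<le> 1"
  proof -
    have "norm (R *v b) = sqrt (b \<bullet> (Pi *v b))" unfolding R_def by (rule norm_msqrt_eq[OF spsdPi])
    also have "b \<bullet> (Pi *v b) \<le> 1" using u unfolding ellipsoid_def b_def Pi_def by simp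
    hence "sqrt (b \<bullet> (Pi *v b)) \<le> 1" by simp
    finally show ?thesis .
  qed
  have "\<bar>d \<bullet> b\<bar> \<le> norm (R *v a) * norm (R *v b)" unfolding db by (rule Cauchy_Schwarz_ineq2)
  also have "\<dots> \<le> norm (R *v a) * 1" using nb by (intro mult_left_mono) auto
  finally show ?thesis unfolding na b_def by simp
qed

lemma ellipsoid_argmin:
  fixes P :: "real^'m^'m"
  assumes P: "spd P" and u0: "u0 \<in> ellipsoid p P" and opt: "\<And>u. u \<in> ellipsoid p P \<Longrightarrow> d \<bullet> u0 \<le> d \<bullet> u"
  shows "d \<bullet> (u0 - p) = - sqrt (d \<bullet> (P *v d))"
proof -
  have ge: "d \<bullet> (u0 - p) \<ge> - sqrt (d \<bullet> (P *v d))" using ellipsoid_CS[OF P u0, of d] by linarith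
  have le: "d \<bullet> (u0 - p) \<le> - sqrt (d \<bullet> (P *v d))"
  proof (cases "d = 0")
    case True thus ?thesis by simp
  next
    case False
    have pos: "d \<bullet> (P *v d) > 0" using P False spd_def by auto
    define \<sigma> where "\<sigma> = sqrt (d \<bullet> (P *v d))"
    have \<sigma>0: "\<sigma> > 0" unfolding \<sigma>_def using pos by simp
    have \<sigma>2: "\<sigma> * \<sigma> = d \<bullet> (P *v d)" unfolding \<sigma>_def using pos by simp
    have invP: "invertible P" using spd_invertible[OF P] .
    define u1 where "u1 = p - (1 / \<sigma>) *\<^sub>R (P *v d)"
    have "u1 \<in> ellipsoid p P"
    proof -
      have "(u1 - p) \<bullet> (matrix_inv P *v (u1 - p)) = (1/\<sigma>)^2 * ((P *v d) \<bullet> (matrix_inv P *v (P *v d)))"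
        unfolding u1_def using quad_scale[of "- (1/\<sigma>)" "P *v d" "matrix_inv P"] by simp
      also have "\<dots> = (1/\<sigma>)^2 * (d \<bullet> (P *v d))" using inv_mult_left[OF invP] by (simp add: inner_commute)
      also have "\<dots> = 1" using \<sigma>2[symmetric] \<sigma>0 by (simp add: power2_eq_square)
      finally show ?thesis unfolding ellipsoid_def by simp
    qed
    hence "d \<bullet> u0 \<le> d \<bullet> u1" by (rule opt)
    hence "d \<bullet> (u0 - p) \<le> d \<bullet> (u1 - p)" by (simp add: inner_diff_right)
    also have "d \<bullet> (u1 - p) = - (1 / \<sigma>) * (d \<bullet> (P *v d))" unfolding u1_def by simp
    also have "\<dots> = - \<sigma>" using \<sigma>2[symmetric] \<sigma>0 by (simp add: field_simps)
    finally show ?thesis unfolding \<sigma>_def .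
  qed
  show ?thesis using ge le by linarith
qed


lemma C1_lipschitz:
  fixes f :: "real \<Rightarrow> 'a::real_normed_vector"
  assumes der: "\<And>s. s \<in> {a..b} \<Longrightarrow> (f has_vector_derivative f' s) (at s within {a..b})"
    and cont: "continuous_on {a..b} f'"
  shows "\<exists>L. \<forall>x\<in>{a..b}. \<forall>y\<in>{a..b}. norm (f x - f y) \<le> L * \<bar>x - y\<bar>"
proof -
  have "compact (f' ` {a..b})" using cont by (intro compact_continuous_image) auto
  then obtain L where L: "\<And>s. s \<in> {a..b} \<Longrightarrow> norm (f' s) \<le> L"
    using compact_imp_bounded bounded_iff by (metis imageI)
  have "norm (f x - f y) \<le> L * norm (x - y)" if "x \<in> {a..b}" "y \<in> {a..b}" for x y
  proof (rule differentiable_bound[of "{a..b}" f "\<lambda>s h. h *\<^sub>R f' s" L])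
    show "convex {a..b}" by simp
    show "(f has_derivative (\<lambda>h. h *\<^sub>R f' s)) (at s within {a..b})" if "s \<in> {a..b}" for s
      using der[OF that] unfolding has_vector_derivative_def .
    show "onorm (\<lambda>h. h *\<^sub>R f' s) \<le> L" if "s \<in> {a..b}" for s
      using L[OF that] onorm_scaleR_left[OF bounded_linear_ident, of "f' s"] onorm_id[where 'a=real] by simp
  qed (use that in auto)
  hence "\<forall>x\<in>{a..b}. \<forall>y\<in>{a..b}. norm (f x - f y) \<le> L * \<bar>x - y\<bar>" by auto
  thus ?thesis by blast
qed

lemma ac_C1:
  fixes f :: "real \<Rightarrow> 'a::real_normed_vector"
  assumes der: "\<And>s. s \<in> {a..b} \<Longrightarrow> (f has_vector_derivative f' s) (at s within {a..b})"
    and cont: "continuous_on {a..b} f'" and "a \<le> c" "d \<le> b"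
  shows "abs_continuous_on c d f"
proof -
  obtain L where "\<forall>x\<in>{a..b}. \<forall>y\<in>{a..b}. norm (f x - f y) \<le> L * \<bar>x - y\<bar>"
    using C1_lipschitz[OF der cont] by blast
  hence "abs_continuous_on a b f" by (intro ac_lipschitz[of a b f L]) auto
  thus ?thesis using ac_sub assms(3,4) by blast
qed

lemma der_cont_on:
  assumes "\<And>s. s \<in> S \<Longrightarrow> (f has_vector_derivative f' s) (at s within S)"
  shows "continuous_on S f"
  using assms has_vector_derivative_continuous continuous_on_eq_continuous_within by blast

lemma bl_transpose: "bounded_linear (transpose :: real^'n^'m \<Rightarrow> real^'m^'n)"
proof -
  have "linear (transpose :: real^'n^'m \<Rightarrow> real^'m^'n)"
    by (rule linearI) (simp_all add: transpose_def vec_eq_iff)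
  thus ?thesis by (simp add: linear_conv_bounded_linear)
qed

lemma continuous_on_transpose[continuous_intros]:
  "continuous_on S f \<Longrightarrow> continuous_on S (\<lambda>x. transpose (f x :: real^'n^'m))"
  using bounded_linear.continuous_on[OF bl_transpose] by blast

lemma continuous_on_mm[continuous_intros]:
  "continuous_on S f \<Longrightarrow> continuous_on S g \<Longrightarrow> continuous_on S (\<lambda>x. (f x :: real^'n^'m) ** (g x :: real^'p^'n))"
  using bounded_bilinear.continuous_on[OF bb_mm] by blast

lemma continuous_on_mv2[continuous_intros]:
  "continuous_on S f \<Longrightarrow> continuous_on S g \<Longrightarrow> continuous_on S (\<lambda>x. (f x :: real^'n^'m) *v (g x :: real^'n))"
  using bounded_bilinear.continuous_on[OF bb_mv] by blast

lemma spd_nonneg: "spd P \<Longrightarrow> z \<bullet> (P *v z) \<ge> 0"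
  unfolding spd_def by (metis inner_zero_left less_le order_refl)

lemma Mst_quad:
  fixes N :: "real^'n^'n" and Bm :: "real^'m^'n" and P :: "real^'m^'m"
  assumes symN: "transpose N = N"
  shows "y \<bullet> ((N ** Bm ** P ** transpose Bm ** N) *v y) = (transpose Bm *v (N *v y)) \<bullet> (P *v (transpose Bm *v (N *v y)))"
proof -
  have "(N ** Bm ** P ** transpose Bm ** N) *v y = N *v (Bm *v (P *v (transpose Bm *v (N *v y))))"
    by (simp add: matrix_vector_mul_assoc matrix_mul_assoc del: transpose_matrix_vector)
  hence "y \<bullet> ((N ** Bm ** P ** transpose Bm ** N) *v y) = (N *v y) \<bullet> (Bm *v (P *v (transpose Bm *v (N *v y))))"
    using sym_inner[OF symN] by simp
  also have "\<dots> = (transpose Bm *v (N *v y)) \<bullet> (P *v (transpose Bm *v (N *v y)))"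
    by (rule inner_mv_transpose)
  finally show ?thesis .
qed

lemma Mst_spsd:
  fixes N :: "real^'n^'n" and Bm :: "real^'m^'n" and P :: "real^'m^'m"
  assumes symN: "transpose N = N" and P: "spd P"
  shows "spsd (N ** Bm ** P ** transpose Bm ** N)"
proof -
  have symP: "transpose P = P" using P spd_def by auto
  have "transpose (N ** Bm ** P ** transpose Bm ** N) = N ** Bm ** P ** transpose Bm ** N"
    by (simp add: matrix_transpose_mul symN symP matrix_mul_assoc)
  moreover have "y \<bullet> ((N ** Bm ** P ** transpose Bm ** N) *v y) \<ge> 0" for y
    unfolding Mst_quad[OF symN] by (rule spd_nonneg[OF P])
  ultimately show ?thesis unfolding spsd_def by auto
qed

context
  fixes T t :: real and A :: "real \<Rightarrow> real^'n^'n" and B :: "real \<Rightarrow> real^'m^'n"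
    and p :: "real^'m" and P :: "real^'m^'m"
    and \<kappa> :: "real \<Rightarrow> real" and q :: "real \<Rightarrow> real^'n" and Q :: "real \<Rightarrow> real^'n^'n"
  assumes A_cont: "continuous_on {0..T} A" and B_cont: "continuous_on {0..T} B" and P_spd: "spd P"
    and k_cont: "continuous_on {0..T} \<kappa>" and k_pos: "\<forall>s\<in>{0..T}. \<kappa> s > 0"
    and q_ode: "\<forall>s\<in>{0..T}. (q has_vector_derivative (A s *v q s + B s *v p)) (at s within {0..T})"
    and Q_ode: "\<forall>s\<in>{0..T}. (Q has_vector_derivative
                     (A s ** Q s + Q s ** transpose (A s)
                      - ((1 / \<kappa> s) *\<^sub>R (B s ** P ** transpose (B s)) + \<kappa> s *\<^sub>R Q s)))
                  (at s within {0..T})"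
    and Q_spd: "\<forall>s\<in>{0..T}. spd (Q s)"
    and t0: "0 \<le> t" and tT: "t \<le> T"
begin

lemma q_cont: "continuous_on {0..T} q"
  using q_ode by (intro der_cont_on) auto

lemma Q_cont: "continuous_on {0..T} Q"
  using Q_ode by (intro der_cont_on) auto

lemma DQ_cont: "continuous_on {0..T} (\<lambda>s. A s ** Q s + Q s ** transpose (A s)
                      - ((1 / \<kappa> s) *\<^sub>R (B s ** P ** transpose (B s)) + \<kappa> s *\<^sub>R Q s))"
  using A_cont B_cont Q_cont k_cont k_pos
  by (intro continuous_intros) auto

lemma M_der: "s \<in> {0..T} \<Longrightarrow> ((\<lambda>s. matrix_inv (Q s)) has_vector_derivative
   (- (matrix_inv (Q s) ** (A s ** Q s + Q s ** transpose (A s)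
                      - ((1 / \<kappa> s) *\<^sub>R (B s ** P ** transpose (B s)) + \<kappa> s *\<^sub>R Q s)) ** matrix_inv (Q s))))
   (at s within {0..T})"
  using Q_ode Q_spd spd_invertible by (intro minv_deriv) auto

lemma M_cont: "continuous_on {0..T} (\<lambda>s. matrix_inv (Q s))"
  using M_der by (intro der_cont_on) auto

lemma q_ac: "abs_continuous_on t T q"
  using q_ode t0 tT by (intro ac_C1[of 0 T q _]) (auto intro!: continuous_intros A_cont B_cont q_cont)

lemma M_ac: "abs_continuous_on t T (\<lambda>s. matrix_inv (Q s))"
  using M_der t0 tT by (intro ac_C1[of 0 T _ _]) (auto intro!: continuous_intros M_cont DQ_cont)

lemma traj_V:
  fixes x :: "real \<Rightarrow> real^'n" and u :: "real \<Rightarrow> real^'m"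
  assumes x_ac: "abs_continuous_on t T x"
    and x_ode: "AE s in lebesgue. s \<in> {t<..<T} \<longrightarrow> (x has_vector_derivative (A s *v x s + B s *v u s)) (at s)"
  shows "abs_continuous_on t T (\<lambda>s. (x s - q s) \<bullet> (matrix_inv (Q s) *v (x s - q s)))"
    and "AE s in lebesgue. s \<in> {t<..<T} \<longrightarrow> ((\<lambda>s. (x s - q s) \<bullet> (matrix_inv (Q s) *v (x s - q s))) has_real_derivative
        (2 * ((transpose (B s) *v (matrix_inv (Q s) *v (x s - q s))) \<bullet> (u s - p))
         + ((transpose (B s) *v (matrix_inv (Q s) *v (x s - q s))) \<bullet> (P *v (transpose (B s) *v (matrix_inv (Q s) *v (x s - q s))))) / \<kappa> s
         + \<kappa> s * ((x s - q s) \<bullet> (matrix_inv (Q s) *v (x s - q s))))) (at s)"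
proof -
  have wac: "abs_continuous_on t T (\<lambda>s. x s - q s)" using ac_diff[OF x_ac q_ac] .
  have Mwac: "abs_continuous_on t T (\<lambda>s. matrix_inv (Q s) *v (x s - q s))"
    using ac_bilinear[OF bb_mv M_ac wac] by simp
  show "abs_continuous_on t T (\<lambda>s. (x s - q s) \<bullet> (matrix_inv (Q s) *v (x s - q s)))"
    using ac_bilinear[OF bounded_bilinear_inner wac Mwac] by simp
  have pw: "((\<lambda>s. (x s - q s) \<bullet> (matrix_inv (Q s) *v (x s - q s))) has_real_derivative
        (2 * ((transpose (B s) *v (matrix_inv (Q s) *v (x s - q s))) \<bullet> (u s - p))
         + ((transpose (B s) *v (matrix_inv (Q s) *v (x s - q s))) \<bullet> (P *v (transpose (B s) *v (matrix_inv (Q s) *v (x s - q s))))) / \<kappa> s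
         + \<kappa> s * ((x s - q s) \<bullet> (matrix_inv (Q s) *v (x s - q s))))) (at s)"
    if s: "s \<in> {t<..<T}" and dx: "(x has_vector_derivative (A s *v x s + B s *v u s)) (at s)" for s
  proof -
    have si: "0 < s" "s < T" using s t0 by auto
    hence s0T: "s \<in> {0..T}" by simp
    have atI: "at s within {0..T} = at s" using at_within_Icc_at si by blast
    let ?DQ = "A s ** Q s + Q s ** transpose (A s) - ((1 / \<kappa> s) *\<^sub>R (B s ** P ** transpose (B s)) + \<kappa> s *\<^sub>R Q s)"
    let ?M = "matrix_inv (Q s)"
    let ?w = "x s - q s"
    let ?w' = "(A s *v x s + B s *v u s) - (A s *v q s + B s *v p)"
    have dq: "(q has_vector_derivative (A s *v q s + B s *v p)) (at s)" using q_ode s0T atI by metis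
    have dM: "((\<lambda>s. matrix_inv (Q s)) has_vector_derivative (- (?M ** ?DQ ** ?M))) (at s)"
      using M_der[OF s0T] atI by simp
    have dw: "((\<lambda>s. x s - q s) has_vector_derivative ?w') (at s)"
      using dx dq by (rule has_vector_derivative_diff)
    have dMw: "((\<lambda>s. matrix_inv (Q s) *v (x s - q s)) has_vector_derivative (?M *v ?w' + (- (?M ** ?DQ ** ?M)) *v ?w)) (at s)"
      using bounded_bilinear.has_vector_derivative[OF bb_mv dM dw] by simp
    have dV: "((\<lambda>s. (x s - q s) \<bullet> (matrix_inv (Q s) *v (x s - q s))) has_vector_derivative
        (?w \<bullet> (?M *v ?w' + (- (?M ** ?DQ ** ?M)) *v ?w) + ?w' \<bullet> (?M *v ?w))) (at s)"
      using bounded_bilinear.has_vector_derivative[OF bounded_bilinear_inner dw dMw] by simp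
    have w'eq: "?w' = A s *v ?w + B s *v (u s - p)"
      by (simp add: matrix_vector_mult_diff_distrib algebra_simps)
    have spdQ: "spd (Q s)" using Q_spd s0T by auto
    have symQ: "transpose (Q s) = Q s" using spdQ spd_def by auto
    have symM: "transpose ?M = ?M" using spd_inv[OF spdQ] spd_def by auto
    have QM: "Q s ** ?M = mat 1" using invertible_props(1)[OF spd_invertible[OF spdQ]] .
    have k0: "\<kappa> s \<noteq> 0" using k_pos s0T by (metis less_irrefl)
    show ?thesis
      unfolding has_real_derivative_iff_has_vector_derivative
      using dV unfolding w'eq dV_algebra[OF symQ symM QM k0] .
  qed
  show "AE s in lebesgue. s \<in> {t<..<T} \<longrightarrow> ((\<lambda>s. (x s - q s) \<bullet> (matrix_inv (Q s) *v (x s - q s))) has_real_derivative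
        (2 * ((transpose (B s) *v (matrix_inv (Q s) *v (x s - q s))) \<bullet> (u s - p))
         + ((transpose (B s) *v (matrix_inv (Q s) *v (x s - q s))) \<bullet> (P *v (transpose (B s) *v (matrix_inv (Q s) *v (x s - q s))))) / \<kappa> s
         + \<kappa> s * ((x s - q s) \<bullet> (matrix_inv (Q s) *v (x s - q s))))) (at s)"
    by (rule eventually_mono[OF x_ode]) (use pw in blast)
qed

lemma V_le_1:
  fixes x :: "real \<Rightarrow> real^'n" and u :: "real \<Rightarrow> real^'m"
  assumes u_in: "\<forall>s\<in>{t..T}. u s \<in> ellipsoid p P"
    and x_ac: "abs_continuous_on t T x"
    and x_ode: "AE s in lebesgue. s \<in> {t<..<T} \<longrightarrow> (x has_vector_derivative (A s *v x s + B s *v u s)) (at s)"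
    and xT: "(x T - q T) \<bullet> (matrix_inv (Q T) *v (x T - q T)) \<le> 1"
  shows "(x t - q t) \<bullet> (matrix_inv (Q t) *v (x t - q t)) \<le> 1"
proof (rule ccontr)
  define V where "V s = (x s - q s) \<bullet> (matrix_inv (Q s) *v (x s - q s))" for s
  assume "\<not> ?thesis"
  hence Vt: "V t > 1" unfolding V_def by simp
  have Vac: "abs_continuous_on t T V" unfolding V_def by (rule traj_V(1)[OF x_ac x_ode])
  define Dv where "Dv s = (2 * ((transpose (B s) *v (matrix_inv (Q s) *v (x s - q s))) \<bullet> (u s - p))
         + ((transpose (B s) *v (matrix_inv (Q s) *v (x s - q s))) \<bullet> (P *v (transpose (B s) *v (matrix_inv (Q s) *v (x s - q s))))) / \<kappa> s
         + \<kappa> s * V s)" for s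
  have Vder: "AE s in lebesgue. s \<in> {t<..<T} \<longrightarrow> (V has_real_derivative Dv s) (at s)"
    unfolding V_def Dv_def by (rule traj_V(2)[OF x_ac x_ode])
  have dpos: "\<exists>D\<ge>0. (V has_real_derivative D) (at s)"
    if s: "s \<in> {t<..<T}" and V1: "V s \<ge> 1" and dV: "(V has_real_derivative Dv s) (at s)" for s
  proof -
    define d where "d = transpose (B s) *v (matrix_inv (Q s) *v (x s - q s))"
    define a where "a = sqrt (d \<bullet> (P *v d))"
    have dd: "d \<bullet> (P *v d) \<ge> 0" by (rule spd_nonneg[OF P_spd])
    have a2: "a^2 = d \<bullet> (P *v d)" unfolding a_def using dd by simp
    have us: "u s \<in> ellipsoid p P" using u_in s by auto
    have du: "d \<bullet> (u s - p) \<ge> - a" using ellipsoid_CS[OF P_spd us, of d] unfolding a_def by linarith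
    have k: "\<kappa> s > 0" using k_pos s t0 by auto
    have "0 \<le> (a - \<kappa> s)^2 / \<kappa> s" using k by simp
    also have "(a - \<kappa> s)^2 / \<kappa> s = - 2 * a + a^2 / \<kappa> s + \<kappa> s" using k
      by (simp add: power2_eq_square field_simps)
    also have "\<dots> \<le> 2 * (d \<bullet> (u s - p)) + (d \<bullet> (P *v d)) / \<kappa> s + \<kappa> s * V s"
    proof -
      have "\<kappa> s \<le> \<kappa> s * V s" using k V1 by simp
      moreover have "a^2 / \<kappa> s = d \<bullet> (P *v d) / \<kappa> s" using a2 by simp
      ultimately show ?thesis using du by linarith
    qed
    finally show ?thesis using dV unfolding d_def Dv_def by blast
  qed
  define S where "S = {t..T} \<inter> V -` {..1}"
  have TS: "T \<in> S" unfolding S_def using tT xT V_def by auto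
  have closedS: "closed S" unfolding S_def
    by (rule continuous_closed_preimage[OF ac_cont[OF Vac]]) auto
  have bddS: "bdd_below S" unfolding S_def by (rule bdd_belowI[of _ t]) auto
  define c where "c = Inf S"
  have cS: "c \<in> S" unfolding c_def using closed_contains_Inf[OF _ bddS closedS] TS by blast
  have lb: "c \<le> s" if "s \<in> S" for s unfolding c_def using cInf_lower[OF that bddS] .
  have ctc: "t \<le> c" "c \<le> T" "V c \<le> 1" using cS unfolding S_def by auto
  have tc: "t < c" using ctc Vt by (cases "t = c") auto
  have before: "V s > 1" if "t \<le> s" "s < c" for s
  proof (rule ccontr)
    assume "\<not> V s > 1"
    hence "s \<in> S" unfolding S_def using that ctc by auto
    thus False using lb that by fastforce
  qed
  have "V t \<le> V c"
  proof (rule ac_mono[of t c V])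
    show "abs_continuous_on t c V" using ac_sub[OF Vac order_refl ctc(2)] .
    show "t \<le> c" using tc by simp
    show "AE s in lebesgue. s \<in> {t<..<c} \<longrightarrow> (\<exists>D\<ge>0. (V has_real_derivative D) (at s))"
    proof (rule eventually_mono[OF Vder], intro impI)
      fix s assume h: "s \<in> {t<..<T} \<longrightarrow> (V has_real_derivative Dv s) (at s)" and s: "s \<in> {t<..<c}"
      have sT: "s \<in> {t<..<T}" using s ctc by auto
      have "V s \<ge> 1" using before[of s] s by auto
      thus "\<exists>D\<ge>0. (V has_real_derivative D) (at s)" using dpos[OF sT] h sT by blast
    qed
  qed
  thus False using Vt ctc by simp
qed

lemma sign_lemma:
  fixes x :: "real \<Rightarrow> real^'n" and u :: "real \<Rightarrow> real^'m"
  assumes s: "s \<in> {t<..<T}"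
    and am: "is_arg_max (\<lambda>v. (- (minvsqrt (Q s) *v (minvsqrt (Q s) *v (x s - q s)))) \<bullet> (B s *v v))
                    (\<lambda>v. v \<in> ellipsoid p P) (u s)"
    and kc: "minvsqrt (Q s) *v (x s - q s) \<noteq> 0 \<longrightarrow>
                  \<kappa> s =
                    norm (msqrt (minvsqrt (Q s) ** B s ** P ** transpose (B s) ** minvsqrt (Q s))
                          *v (minvsqrt (Q s) *v (x s - q s)))
                    / norm (minvsqrt (Q s) *v (x s - q s))"
  shows "((x s - q s) \<bullet> (matrix_inv (Q s) *v (x s - q s)) - 1) *
     (2 * ((transpose (B s) *v (matrix_inv (Q s) *v (x s - q s))) \<bullet> (u s - p))
         + ((transpose (B s) *v (matrix_inv (Q s) *v (x s - q s))) \<bullet> (P *v (transpose (B s) *v (matrix_inv (Q s) *v (x s - q s))))) / \<kappa> s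
         + \<kappa> s * ((x s - q s) \<bullet> (matrix_inv (Q s) *v (x s - q s)))) \<ge> 0"
proof -
  have s0T: "s \<in> {0..T}" using s t0 by auto
  have spdQ: "spd (Q s)" using Q_spd s0T by auto
  have k: "\<kappa> s > 0" using k_pos s0T by auto
  define N where "N = minvsqrt (Q s)"
  define M where "M = matrix_inv (Q s)"
  define w where "w = x s - q s"
  define c where "c = M *v w"
  define d where "d = transpose (B s) *v c"
  define a where "a = sqrt (d \<bullet> (P *v d))"
  define Vs where "Vs = w \<bullet> (M *v w)"
  have symN: "transpose N = N" and NN: "N ** N = M" and invN: "invertible N"
    using minvsqrt_props[OF spdQ] unfolding N_def M_def by auto
  have NNw: "N *v (N *v w) = c" unfolding c_def by (simp add: matrix_vector_mul_assoc NN)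
  have dd: "d \<bullet> (P *v d) \<ge> 0" by (rule spd_nonneg[OF P_spd])
  have a0: "a \<ge> 0" unfolding a_def using dd by simp
  have a2: "a * a = d \<bullet> (P *v d)" unfolding a_def using dd by simp
  have obj: "(- (N *v (N *v w))) \<bullet> (B s *v v) = - (d \<bullet> v)" for v
    unfolding NNw d_def using inner_mv_transpose[of c "B s" v] by simp
  have us: "u s \<in> ellipsoid p P" and opt: "\<And>v. v \<in> ellipsoid p P \<Longrightarrow> d \<bullet> u s \<le> d \<bullet> v"
    using am unfolding is_arg_max_def N_def[symmetric] w_def[symmetric] obj by (auto simp: not_less)
  have du: "d \<bullet> (u s - p) = - a" unfolding a_def by (rule ellipsoid_argmin[OF P_spd us opt])
  have goal: "(Vs - 1) * (2 * (d \<bullet> (u s - p)) + (d \<bullet> (P *v d)) / \<kappa> s + \<kappa> s * Vs) \<ge> 0"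
  proof (cases "w = 0")
    case True
    hence "c = 0" "Vs = 0" unfolding c_def Vs_def by auto
    hence "d = 0" unfolding d_def by simp
    thus ?thesis using \<open>Vs = 0\<close> by simp
  next
    case False
    define wh where "wh = N *v w"
    have wh0: "wh \<noteq> 0" unfolding wh_def using invertible_inj[OF invN] False by blast
    have kap: "\<kappa> s = norm (msqrt (N ** B s ** P ** transpose (B s) ** N) *v wh) / norm wh"
      using kc wh0 unfolding wh_def N_def w_def by simp
    have n1: "norm (msqrt (N ** B s ** P ** transpose (B s) ** N) *v wh) = a"
    proof -
      have "norm (msqrt (N ** B s ** P ** transpose (B s) ** N) *v wh)
          = sqrt (wh \<bullet> ((N ** B s ** P ** transpose (B s) ** N) *v wh))"
        by (rule norm_msqrt_eq[OF Mst_spsd[OF symN P_spd]])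
      also have "wh \<bullet> ((N ** B s ** P ** transpose (B s) ** N) *v wh) = d \<bullet> (P *v d)"
        unfolding Mst_quad[OF symN] wh_def NNw d_def ..
      finally show ?thesis unfolding a_def .
    qed
    have whwh: "wh \<bullet> wh = Vs"
    proof -
      have "wh \<bullet> wh = w \<bullet> (N *v (N *v w))" unfolding wh_def using sym_inner[OF symN, of w "N *v w"] by simp
      thus ?thesis unfolding NNw Vs_def c_def .
    qed
    define r where "r = sqrt Vs"
    have Vs0: "Vs > 0" using wh0 whwh by (metis inner_gt_zero_iff)
    have r0: "r > 0" unfolding r_def using Vs0 by simp
    have rr: "r * r = Vs" unfolding r_def using Vs0 by simp
    have n2: "norm wh = r" unfolding r_def whwh[symmetric] by (simp add: norm_eq_sqrt_inner)
    have kar: "\<kappa> s = a / r" using kap n1 n2 by simp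
    have apos: "a > 0" using k kar r0 by (metis divide_nonpos_pos less_le not_le)
    have e1: "(d \<bullet> (P *v d)) / \<kappa> s = a * r" unfolding kar a2[symmetric] using apos r0 by (simp add: field_simps)
    have "\<kappa> s * Vs = (a / r) * (r * r)" using kar rr by simp
    also have "\<dots> = a * r" using r0 by (simp add: field_simps power2_eq_square)
    finally have e2: "\<kappa> s * Vs = a * r" .
    have "(Vs - 1) * (2 * (d \<bullet> (u s - p)) + (d \<bullet> (P *v d)) / \<kappa> s + \<kappa> s * Vs)
        = 2 * a * (r + 1) * (r - 1)^2"
      unfolding du e1 e2 unfolding rr[symmetric] by (simp add: power2_eq_square algebra_simps)
    also have "\<dots> \<ge> 0" using apos r0 by simp
    finally show ?thesis .
  qed
  thus ?thesis unfolding Vs_def d_def c_def M_def w_def .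
qed

lemma V_eq_1:
  fixes x :: "real \<Rightarrow> real^'n" and u :: "real \<Rightarrow> real^'m"
  assumes x_ac: "abs_continuous_on t T x"
    and x_ode: "AE s in lebesgue. s \<in> {t<..<T} \<longrightarrow> (x has_vector_derivative (A s *v x s + B s *v u s)) (at s)"
    and u_max: "AE s in lebesgue. s \<in> {t<..<T} \<longrightarrow>
                  is_arg_max
                    (\<lambda>u. (- (minvsqrt (Q s) *v (minvsqrt (Q s) *v (x s - q s))))
                           \<bullet> (B s *v u))
                    (\<lambda>u. u \<in> ellipsoid p P) (u s)"
    and kc: "\<forall>s\<in>{t..T}.
                  minvsqrt (Q s) *v (x s - q s) \<noteq> 0 \<longrightarrow>
                  \<kappa> s =
                    norm (msqrt (minvsqrt (Q s) ** B s ** P ** transpose (B s) ** minvsqrt (Q s))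
                          *v (minvsqrt (Q s) *v (x s - q s)))
                    / norm (minvsqrt (Q s) *v (x s - q s))"
    and xT: "(x T - q T) \<bullet> (matrix_inv (Q T) *v (x T - q T)) = 1"
  shows "(x t - q t) \<bullet> (matrix_inv (Q t) *v (x t - q t)) = 1"
proof -
  define V where "V s = (x s - q s) \<bullet> (matrix_inv (Q s) *v (x s - q s))" for s
  define Dv where "Dv s = (2 * ((transpose (B s) *v (matrix_inv (Q s) *v (x s - q s))) \<bullet> (u s - p))
         + ((transpose (B s) *v (matrix_inv (Q s) *v (x s - q s))) \<bullet> (P *v (transpose (B s) *v (matrix_inv (Q s) *v (x s - q s))))) / \<kappa> s
         + \<kappa> s * V s)" for s
  have Vac: "abs_continuous_on t T V" unfolding V_def by (rule traj_V(1)[OF x_ac x_ode])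
  have Vder: "AE s in lebesgue. s \<in> {t<..<T} \<longrightarrow> (V has_real_derivative Dv s) (at s)"
    unfolding V_def Dv_def by (rule traj_V(2)[OF x_ac x_ode])
  define g where "g s = (V s - 1) * (V s - 1)" for s
  have V1ac: "abs_continuous_on t T (\<lambda>s. V s - 1)" using ac_diff[OF Vac ac_const] .
  have gac: "abs_continuous_on t T g" unfolding g_def
    using ac_bilinear[OF bounded_bilinear_mult V1ac V1ac] by simp
  have gder: "AE s in lebesgue. s \<in> {t<..<T} \<longrightarrow> (\<exists>D\<ge>0. (g has_real_derivative D) (at s))"
    using Vder u_max
  proof eventually_elim
    case (elim s)
    show ?case
    proof
      assume s: "s \<in> {t<..<T}"
      hence dV: "(V has_real_derivative Dv s) (at s)" and am: "is_arg_max
                    (\<lambda>u. (- (minvsqrt (Q s) *v (minvsqrt (Q s) *v (x s - q s))))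
                           \<bullet> (B s *v u))
                    (\<lambda>u. u \<in> ellipsoid p P) (u s)" using elim by auto
      have kcs: "minvsqrt (Q s) *v (x s - q s) \<noteq> 0 \<longrightarrow>
                  \<kappa> s =
                    norm (msqrt (minvsqrt (Q s) ** B s ** P ** transpose (B s) ** minvsqrt (Q s))
                          *v (minvsqrt (Q s) *v (x s - q s)))
                    / norm (minvsqrt (Q s) *v (x s - q s))" using kc s by auto
      have sg: "(V s - 1) * Dv s \<ge> 0" unfolding V_def Dv_def using sign_lemma[where x=x and u=u and s=s, OF s am kcs] .
      have "(g has_real_derivative (Dv s * (V s - 1) + (V s - 1) * Dv s)) (at s)"
        unfolding g_def using dV by (auto intro!: derivative_eq_intros)
      moreover have "Dv s * (V s - 1) + (V s - 1) * Dv s \<ge> 0" using sg by (simp add: mult.commute)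
      ultimately show "\<exists>D\<ge>0. (g has_real_derivative D) (at s)" by blast
    qed
  qed
  have "g t \<le> g T" by (rule ac_mono[of t T g, OF gac tT gder])
  moreover have "g T = 0" unfolding g_def V_def using xT by simp
  ultimately have "(V t - 1) * (V t - 1) \<le> 0" unfolding g_def by simp
  hence "V t - 1 = 0" by (metis mult_eq_0_iff mult_le_0_iff order_antisym_conv zero_le_square)
  thus ?thesis unfolding V_def by simp
qed

end


theorem corollary4:
  fixes T t :: real
    and A :: "real \<Rightarrow> real^'n^'n" and B :: "real \<Rightarrow> real^'m^'n"
    and p :: "real^'m" and P :: "real^'m^'m"
    and xe :: "real^'n" and Xe :: "real^'n^'n"
    and nq i :: nat
    and \<kappa> :: "nat \<Rightarrow> real \<Rightarrow> real"
    and q :: "nat \<Rightarrow> real \<Rightarrow> real^'n" and Q :: "nat \<Rightarrow> real \<Rightarrow> real^'n^'n"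
    and ustar :: "real \<Rightarrow> real^'m" and xstar :: "real \<Rightarrow> real^'n"
  assumes T_pos: "T > 0"
    and A_cont: "continuous_on {0..T} A"
    and B_cont: "continuous_on {0..T} B"
    and P_spd: "spd P"
    and Xe_spd: "spd Xe"
    and kappa_cont: "\<forall>j\<in>{1..nq}. continuous_on {0..T} (\<kappa> j)"
    and kappa_pos: "\<forall>j\<in>{1..nq}. \<forall>s\<in>{0..T}. \<kappa> j s > 0"
    and q_ode: "\<forall>j\<in>{1..nq}. \<forall>s\<in>{0..T}.
                  (q j has_vector_derivative (A s *v q j s + B s *v p)) (at s within {0..T})"
    and Q_ode: "\<forall>j\<in>{1..nq}. \<forall>s\<in>{0..T}.
                  (Q j has_vector_derivative
                     (A s ** Q j s + Q j s ** transpose (A s)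
                      - ((1 / \<kappa> j s) *\<^sub>R (B s ** P ** transpose (B s)) + \<kappa> j s *\<^sub>R Q j s)))
                  (at s within {0..T})"
    and Q_spd: "\<forall>j\<in>{1..nq}. \<forall>s\<in>{0..T}. spd (Q j s)"
    and q_end: "\<forall>j\<in>{1..nq}. q j T = xe"
    and Q_end: "\<forall>j\<in>{1..nq}. Q j T = Xe"
    and t_in: "t \<in> {0..T}"
    and i_in: "i \<in> {1..nq}"
    and u_adm: "ustar \<in> admissible_controls t T (ellipsoid p P)"
    and x_ac: "abs_continuous_on t T xstar"
    and x_ode: "AE s in lebesgue. s \<in> {t<..<T} \<longrightarrow>
                  (xstar has_vector_derivative (A s *v xstar s + B s *v ustar s)) (at s)"
    and x_end: "xstar T \<in> frontier (ellipsoid xe Xe)"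
    and u_max: "AE s in lebesgue. s \<in> {t<..<T} \<longrightarrow>
                  is_arg_max
                    (\<lambda>u. (- (minvsqrt (Q i s) *v (minvsqrt (Q i s) *v (xstar s - q i s))))
                           \<bullet> (B s *v u))
                    (\<lambda>u. u \<in> ellipsoid p P) (ustar s)"
    and kappa_choice: "\<forall>s\<in>{t..T}.
                  minvsqrt (Q i s) *v (xstar s - q i s) \<noteq> 0 \<longrightarrow>
                  \<kappa> i s =
                    norm (msqrt (minvsqrt (Q i s) ** B s ** P ** transpose (B s) ** minvsqrt (Q i s))
                          *v (minvsqrt (Q i s) *v (xstar s - q i s)))
                    / norm (minvsqrt (Q i s) *v (xstar s - q i s))"
  shows "xstar t \<in> frontier (ellipsoid (q i t) (Q i t))
           \<inter> frontier (backward_reach A B (ellipsoid p P) (ellipsoid xe Xe) T t)"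
proof -
  have i1: "i \<in> {1..nq}" using i_in .
  have kc_i: "continuous_on {0..T} (\<kappa> i)" using kappa_cont i1 by blast
  have kp_i: "\<forall>s\<in>{0..T}. \<kappa> i s > 0" using kappa_pos i1 by blast
  have q_i: "\<forall>s\<in>{0..T}. (q i has_vector_derivative (A s *v q i s + B s *v p)) (at s within {0..T})"
    using q_ode i1 by blast
  have Q_i: "\<forall>s\<in>{0..T}. (Q i has_vector_derivative
                     (A s ** Q i s + Q i s ** transpose (A s)
                      - ((1 / \<kappa> i s) *\<^sub>R (B s ** P ** transpose (B s)) + \<kappa> i s *\<^sub>R Q i s)))
                  (at s within {0..T})" using Q_ode i1 by blast
  have Qs_i: "\<forall>s\<in>{0..T}. spd (Q i s)" using Q_spd i1 by blast
  have t0: "0 \<le> t" and tT: "t \<le> T" using t_in by auto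
  have qT: "q i T = xe" using q_end i1 by blast
  have QT: "Q i T = Xe" using Q_end i1 by blast
  note ctx = A_cont B_cont P_spd kc_i kp_i q_i Q_i Qs_i t0 tT
  have xT1: "(xstar T - q i T) \<bullet> (matrix_inv (Q i T) *v (xstar T - q i T)) = 1"
    using ellipsoid_frontier_imp[OF x_end] qT QT by simp
  have xt1: "(xstar t - q i t) \<bullet> (matrix_inv (Q i t) *v (xstar t - q i t)) = 1"
    by (rule V_eq_1[OF ctx x_ac x_ode u_max kappa_choice xT1])
  have part1: "xstar t \<in> frontier (ellipsoid (q i t) (Q i t))"
    by (rule ellipsoid_frontier_of[OF xt1])
  define G where "G = backward_reach A B (ellipsoid p P) (ellipsoid xe Xe) T t"
  have Gsub: "G \<subseteq> ellipsoid (q i t) (Q i t)"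
  proof
    fix x0 assume "x0 \<in> G"
    then obtain u x where u: "u \<in> admissible_controls t T (ellipsoid p P)"
      and sol: "is_solution A B t T u x" and x0: "x t = x0" and xTe: "x T \<in> ellipsoid xe Xe"
      unfolding G_def backward_reach_def by blast
    have u_in: "\<forall>s\<in>{t..T}. u s \<in> ellipsoid p P" using u unfolding admissible_controls_def by blast
    have xac: "abs_continuous_on t T x"
      and xode: "AE s in lebesgue. s \<in> {t<..<T} \<longrightarrow> (x has_vector_derivative (A s *v x s + B s *v u s)) (at s)"
      using sol unfolding is_solution_def by auto
    have "(x T - q i T) \<bullet> (matrix_inv (Q i T) *v (x T - q i T)) \<le> 1"
      using xTe qT QT unfolding ellipsoid_def by simp
    hence "(x t - q i t) \<bullet> (matrix_inv (Q i t) *v (x t - q i t)) \<le> 1"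
      by (rule V_le_1[OF ctx u_in xac xode])
    thus "x0 \<in> ellipsoid (q i t) (Q i t)" using x0 unfolding ellipsoid_def by simp
  qed
  have xG: "xstar t \<in> G"
  proof -
    have "xstar T \<in> ellipsoid xe Xe" using x_end ellipsoid_closed frontier_subset_closed by blast
    moreover have "is_solution A B t T ustar xstar" unfolding is_solution_def using x_ac x_ode by blast
    ultimately show ?thesis unfolding G_def backward_reach_def using u_adm by blast
  qed
  have "xstar t \<notin> interior (ellipsoid (q i t) (Q i t))" using part1 unfolding frontier_def by blast
  hence "xstar t \<notin> interior G" using interior_mono[OF Gsub] by blast
  moreover have "xstar t \<in> closure G" using xG closure_subset by blast
  ultimately have "xstar t \<in> frontier G" unfolding frontier_def by blast
  thus ?thesis using part1 unfolding G_def by blast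
qed


end
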